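(* Consider the censored delayed-feedback bandit model with threshold $m\ge1$ (see context), with arm $1$ the unique optimal arm, $\Delta_k=\theta_1-\theta_k>0$ for $k\neq1$, and $\tau_m>0$. Let $\epsilon>0$ and run the algorithm DelayedUCB with exploration function $\beta_\epsilon(t)=(1+\epsilon)\log t$. Then its expected regret satisfies \[ L(T)\le (1+\epsilon)\log(T)\sum_{k\neq1}\frac{1}{2\tau_m\Delta_k}+o(\log T), \] where the $o(\log T)$ term (which may depend on $\epsilon$, $m$, $\theta$ and the delay distribution) divided by $\log T$ tends to $0$ as $T\to\infty$.
   Context: Censored delayed-feedback bandit model: $K$ arms with unknown conversion rates $\theta_1,\dots,\theta_K\in[0,1]$; a known delay distribution on $\mathbb{N}$ with CDF $\tau_d=\mathbb{P}(D\le d)$; a threshold $m\ge1$. At each round $t$ the learner picks $A_t\in\{1,\dots,K\}$ based on past observations; this triggers, conditionally independently given the past, $C_t\sim\mathrm{Bernoulli}(\theta_{A_t})$ and a delay $D_t\sim\tau$. With $X_{s,t}=C_s\mathbf{1}\{D_s\le t-s\}$, at round $t$ the learner observes $X_{s,t}$ for $t-m\le s\le t$ and receives reward $Y_t=\sum_{s=t-m}^tC_s\mathbf{1}\{D_s=t-s\}$. Expected regret: $L(T)=\mathbb{E}[r^*(T)-r(T)]$, $r(T)=\sum_{t\le T}Y_t$, $r^*(T)$ the cumulated reward of the oracle always playing arm $1$. Estimators: $N_k(t)=\sum_{s=1}^{t-1}\mathbf{1}\{A_s=k\}$; $\tilde N_k(t)=\tau_m\sum_{s=1}^{t-m}\mathbf{1}\{A_s=k\}+\sum_{s=t-m+1}^{t-1}\mathbf{1}\{A_s=k\}\tau_{t-s}$;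 $S_k(t)=\sum_{s=1}^{t-1}\mathbf{1}\{A_s=k\}C_s\mathbf{1}\{D_s\le\min(t-s,m)\}$ (the number of conversions of previous pulls of arm $k$ observed by time $t$); $\hat\theta_k(t)=S_k(t)/\tilde N_k(t)$. DelayedUCB: during the first $K$ rounds play each arm once; for $t>K$ play $A_t\in\arg\max_kU_k(t)$ where $U_k(t)=\hat\theta_k(t)+\sqrt{N_k(t)/\tilde N_k(t)}\sqrt{\beta_\epsilon(t)/(2\tilde N_k(t))}$. *)

theory Defs
  imports "HOL-Probability.Probability"
begin

text \<open>Censored delayed-feedback bandit model.
  A history of length n is a list whose entry at index s-1 records round s:
  (A_s, C_s, D_s) = (arm pulled, conversion, delay). Arms are 1..K.\<close>

type_synonym hist = "(nat \<times> bool \<times> nat) list"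

definition arm :: "hist \<Rightarrow> nat \<Rightarrow> nat" where
  "arm h s = fst (h ! (s - 1))"

definition conv :: "hist \<Rightarrow> nat \<Rightarrow> bool" where
  "conv h s = fst (snd (h ! (s - 1)))"

definition dly :: "hist \<Rightarrow> nat \<Rightarrow> nat" where
  "dly h s = snd (snd (h ! (s - 1)))"

definition tau :: "nat pmf \<Rightarrow> nat \<Rightarrow> real" where
  "tau Dl d = measure_pmf.prob Dl {..d}"

definition Nk :: "hist \<Rightarrow> nat \<Rightarrow> nat \<Rightarrow> real" where
  "Nk h k t = real (card {s \<in> {1..t-1}. arm h s = k})"

definition Ntil :: "nat pmf \<Rightarrow> nat \<Rightarrow> hist \<Rightarrow> nat \<Rightarrow> nat \<Rightarrow> real" where
  "Ntil Dl m h k t =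
     tau Dl m * real (card {s \<in> {1..t-m}. arm h s = k})
     + (\<Sum>s\<in>{t-m+1..t-1}. if arm h s = k then tau Dl (t - s) else 0)"

definition Sk :: "nat \<Rightarrow> hist \<Rightarrow> nat \<Rightarrow> nat \<Rightarrow> real" where
  "Sk m h k t = real (card {s \<in> {1..t-1}. arm h s = k \<and> conv h s \<and> dly h s \<le> min (t - s) m})"

definition theta_hat :: "nat pmf \<Rightarrow> nat \<Rightarrow> hist \<Rightarrow> nat \<Rightarrow> nat \<Rightarrow> real" where
  "theta_hat Dl m h k t = Sk m h k t / Ntil Dl m h k t"

definition ucb :: "nat pmf \<Rightarrow> nat \<Rightarrow> (nat \<Rightarrow> real) \<Rightarrow> hist \<Rightarrow> nat \<Rightarrow> nat \<Rightarrow> real" where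
  "ucb Dl m beta h k t =
     theta_hat Dl m h k t
     + sqrt (Nk h k t / Ntil Dl m h k t) * sqrt (beta t / (2 * Ntil Dl m h k t))"

text \<open>A (deterministic, history-based) policy pol is a DelayedUCB policy:
  the current round is t = length h + 1; in the first K rounds each arm is
  played once (in any order), afterwards an arm maximizing the UCB index is
  played (ties broken arbitrarily).\<close>
definition is_delayed_ucb :: "nat \<Rightarrow> nat pmf \<Rightarrow> nat \<Rightarrow> (nat \<Rightarrow> real) \<Rightarrow> (hist \<Rightarrow> nat) \<Rightarrow> bool" where
  "is_delayed_ucb K Dl m beta pol \<longleftrightarrow>
     (\<forall>h. (length h < K \<longrightarrow> pol h \<in> {1..K} - set (map fst h)) \<and>
          (K \<le> length h \<longrightarrow> pol h \<in> {1..K} \<and>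
              (\<forall>j\<in>{1..K}. ucb Dl m beta h j (length h + 1)
                          \<le> ucb Dl m beta h (pol h) (length h + 1))))"

fun hist_pmf :: "(nat \<Rightarrow> real) \<Rightarrow> nat pmf \<Rightarrow> (hist \<Rightarrow> nat) \<Rightarrow> nat \<Rightarrow> hist pmf" where
  "hist_pmf \<theta> Dl pol 0 = return_pmf []"
| "hist_pmf \<theta> Dl pol (Suc n) =
     bind_pmf (hist_pmf \<theta> Dl pol n) (\<lambda>h.
       bind_pmf (bernoulli_pmf (\<theta> (pol h))) (\<lambda>c.
         bind_pmf Dl (\<lambda>d. return_pmf (h @ [(pol h, c, d)]))))"

definition reward :: "nat \<Rightarrow> hist \<Rightarrow> nat \<Rightarrow> real" where
  "reward m h t = (\<Sum>s\<in>{max 1 (t - m)..t}. if conv h s \<and> dly h s = t - s then 1 else 0)"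

definition cum_reward :: "nat \<Rightarrow> hist \<Rightarrow> nat \<Rightarrow> real" where
  "cum_reward m h T = (\<Sum>t\<in>{1..T}. reward m h t)"

definition regret :: "(nat \<Rightarrow> real) \<Rightarrow> nat pmf \<Rightarrow> nat \<Rightarrow> (hist \<Rightarrow> nat) \<Rightarrow> nat \<Rightarrow> real" where
  "regret \<theta> Dl m pol T =
     measure_pmf.expectation (hist_pmf \<theta> Dl (\<lambda>_. 1) T) (\<lambda>h. cum_reward m h T)
     - measure_pmf.expectation (hist_pmf \<theta> Dl pol T) (\<lambda>h. cum_reward m h T)"

end

theory Submission
  imports Defs
begin



lemma expectation_bind_pmf_bounded0:
  fixes f :: "'b \<Rightarrow> real"
  assumes "\<And>x. \<bar>f x\<bar> \<le> B"
  shows "measure_pmf.expectation (bind_pmf M N) f = measure_pmf.expectation M (\<lambda>x. measure_pmf.expectation (N x) f)"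
  unfolding measure_pmf_bind
  apply (rule integral_bind[where K="count_space UNIV" and B=B and B'=1])
  using assms measure_pmf_in_subprob_algebra by (auto simp: measure_pmf.emeasure_space_1 measure_subprob)

lemma expectation_bind_pmf_bounded:
  fixes f :: "'b \<Rightarrow> real"
  assumes "\<And>x. x \<in> set_pmf (bind_pmf M N) \<Longrightarrow> \<bar>f x\<bar> \<le> B"
  shows "measure_pmf.expectation (bind_pmf M N) f = measure_pmf.expectation M (\<lambda>x. measure_pmf.expectation (N x) f)"
proof -
  define g where "g = (\<lambda>x. if x \<in> set_pmf (bind_pmf M N) then f x else 0)"
  have gb: "\<bar>g x\<bar> \<le> max B 0" for x using assms[of x] by (auto simp add: g_def intro: max.coboundedI1)
  have 1: "measure_pmf.expectation (bind_pmf M N) f = measure_pmf.expectation (bind_pmf M N) g"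
    by (intro integral_cong_AE) (auto simp: g_def AE_measure_pmf_iff)
  have 2: "measure_pmf.expectation M (\<lambda>x. measure_pmf.expectation (N x) f) =
           measure_pmf.expectation M (\<lambda>x. measure_pmf.expectation (N x) g)"
    by (intro integral_cong_AE) (auto simp: g_def AE_measure_pmf_iff intro!: integral_cong_AE)
  show ?thesis unfolding 1 2 by (rule expectation_bind_pmf_bounded0[OF gb])
qed

lemma integrable_pmf_bounded:
  fixes f :: "'b \<Rightarrow> real"
  assumes "\<And>x. x \<in> set_pmf M \<Longrightarrow> \<bar>f x\<bar> \<le> B"
  shows "integrable (measure_pmf M) f"
  by (rule measure_pmf.integrable_const_bound[where B=B]) (use assms in \<open>auto simp: AE_measure_pmf_iff\<close>)

lemma expectation_pmf_le:
  fixes f :: "'b \<Rightarrow> real"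
  assumes "\<And>x. x \<in> set_pmf M \<Longrightarrow> \<bar>f x\<bar> \<le> B" "\<And>x. x \<in> set_pmf M \<Longrightarrow> f x \<le> g x"
    "\<And>x. x \<in> set_pmf M \<Longrightarrow> \<bar>g x\<bar> \<le> B'"
  shows "measure_pmf.expectation M f \<le> measure_pmf.expectation M g"
  by (rule integral_mono_AE) (use assms in \<open>auto simp: AE_measure_pmf_iff intro: integrable_pmf_bounded\<close>)

lemma expectation_pmf_le_const:
  fixes f :: "'b \<Rightarrow> real"
  assumes "\<And>x. x \<in> set_pmf M \<Longrightarrow> \<bar>f x\<bar> \<le> B" "\<And>x. x \<in> set_pmf M \<Longrightarrow> f x \<le> c"
  shows "measure_pmf.expectation M f \<le> c"
proof -
  have "measure_pmf.expectation M f \<le> measure_pmf.expectation M (\<lambda>_. c)"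
    by (rule integral_mono_AE) (use assms in \<open>auto simp: AE_measure_pmf_iff intro: integrable_pmf_bounded\<close>)
  then show ?thesis by simp
qed

lemma expectation_pmf_abs_le:
  fixes f :: "'b \<Rightarrow> real"
  assumes "\<And>x. x \<in> set_pmf M \<Longrightarrow> \<bar>f x\<bar> \<le> B"
  shows "\<bar>measure_pmf.expectation M f\<bar> \<le> B"
proof -
  have "\<bar>measure_pmf.expectation M f\<bar> \<le> measure_pmf.expectation M (\<lambda>x. \<bar>f x\<bar>)" by simp
  also have "\<dots> \<le> B" by (rule expectation_pmf_le_const[where B=B]) (use assms in auto)
  finally show ?thesis .
qed

lemma hist_support:
  "h \<in> set_pmf (hist_pmf \<theta> Dl pol n) \<Longrightarrow> length h = n \<and> (\<forall>s\<in>{1..n}. arm h s = pol (take (s-1) h))"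
proof (induction n arbitrary: h)
  case 0 then show ?case by simp
next
  case (Suc n)
  then obtain h0 c d where h: "h = h0 @ [(pol h0, c, d)]" "h0 \<in> set_pmf (hist_pmf \<theta> Dl pol n)"
    by auto
  from Suc.IH[OF h(2)] have IH: "length h0 = n" "\<forall>s\<in>{1..n}. arm h0 s = pol (take (s-1) h0)" by auto
  have "arm h s = pol (take (s-1) h)" if "s \<in> {1..Suc n}" for s
  proof (cases "s = Suc n")
    case True then show ?thesis using IH h by (simp add: arm_def nth_append)
  next
    case False
    then have "s \<in> {1..n}" using that by auto
    then show ?thesis using IH h by (auto simp: arm_def nth_append)
  qed
  then show ?case using h IH by simp
qed

lemma hist_bounded_step:
  fixes f :: "hist \<Rightarrow> real"
  assumes "\<And>x. x \<in> set_pmf (hist_pmf \<theta> Dl pol (Suc n)) \<Longrightarrow> \<bar>f x\<bar> \<le> B"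
  shows "measure_pmf.expectation (hist_pmf \<theta> Dl pol (Suc n)) f =
    measure_pmf.expectation (hist_pmf \<theta> Dl pol n) (\<lambda>h.
      measure_pmf.expectation (bernoulli_pmf (\<theta> (pol h))) (\<lambda>c.
        measure_pmf.expectation Dl (\<lambda>d. f (h @ [(pol h, c, d)]))))"
proof -
  have "measure_pmf.expectation (hist_pmf \<theta> Dl pol (Suc n)) f =
    measure_pmf.expectation (hist_pmf \<theta> Dl pol n) (\<lambda>h. measure_pmf.expectation (bernoulli_pmf (\<theta> (pol h)) \<bind> (\<lambda>c.
         Dl \<bind> (\<lambda>d. return_pmf (h @ [(pol h, c, d)])))) f)"
    using assms by (simp only: hist_pmf.simps) (rule expectation_bind_pmf_bounded)
  also have "\<dots> = measure_pmf.expectation (hist_pmf \<theta> Dl pol n) (\<lambda>h.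
      measure_pmf.expectation (bernoulli_pmf (\<theta> (pol h))) (\<lambda>c.
        measure_pmf.expectation Dl (\<lambda>d. f (h @ [(pol h, c, d)]))))"
  proof (intro integral_cong_AE, simp, simp, unfold AE_measure_pmf_iff, intro ballI)
    fix h assume h: "h \<in> set_pmf (hist_pmf \<theta> Dl pol n)"
    have "measure_pmf.expectation (bernoulli_pmf (\<theta> (pol h)) \<bind> (\<lambda>c. Dl \<bind> (\<lambda>d. return_pmf (h @ [(pol h, c, d)])))) f
      = measure_pmf.expectation (bernoulli_pmf (\<theta> (pol h))) (\<lambda>c. measure_pmf.expectation (Dl \<bind> (\<lambda>d. return_pmf (h @ [(pol h, c, d)]))) f)"
      by (rule expectation_bind_pmf_bounded[where B=B]) (use h assms in auto)
    also have "\<dots> = measure_pmf.expectation (bernoulli_pmf (\<theta> (pol h))) (\<lambda>c.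
        measure_pmf.expectation Dl (\<lambda>d. f (h @ [(pol h, c, d)])))"
    proof (intro integral_cong_AE, simp, simp, unfold AE_measure_pmf_iff, intro ballI)
      fix c assume c: "c \<in> set_pmf (bernoulli_pmf (\<theta> (pol h)))"
      show "measure_pmf.expectation (Dl \<bind> (\<lambda>d. return_pmf (h @ [(pol h, c, d)]))) f =
        measure_pmf.expectation Dl (\<lambda>d. f (h @ [(pol h, c, d)]))"
        by (subst expectation_bind_pmf_bounded[where B=B]) (use h c assms in auto)
    qed
    finally show "measure_pmf.expectation (bernoulli_pmf (\<theta> (pol h)) \<bind> (\<lambda>c. Dl \<bind> (\<lambda>d. return_pmf (h @ [(pol h, c, d)])))) f
      = measure_pmf.expectation (bernoulli_pmf (\<theta> (pol h))) (\<lambda>c. measure_pmf.expectation Dl (\<lambda>d. f (h @ [(pol h, c, d)])))" .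
  qed
  finally show ?thesis .
qed




lemma hoeff_two_point:
  fixes q l :: real
  assumes q: "0 \<le> q" "q \<le> 1"
  shows "q * exp (l * (1 - q)) + (1 - q) * exp (- l * q) \<le> exp (l\<^sup>2 / 8)"
proof (cases "l \<ge> 0")
  case True
  have pos: "1 + q * (exp l - 1) > 0" using q True
    by (smt (verit) exp_ge_zero mult_nonneg_nonneg one_le_exp_iff)
  have "- l * q + ln (1 + q * (exp l - 1)) \<le> l\<^sup>2 / 8"
    using Hoeffdings_lemma_aux[of l q] True q by simp
  hence "exp (- l * q + ln (1 + q * (exp l - 1))) \<le> exp (l\<^sup>2 / 8)" by simp
  also have "exp (- l * q + ln (1 + q * (exp l - 1))) = exp (-l*q) * (1 + q * (exp l - 1))"
    using pos by (simp add: exp_add exp_diff exp_minus divide_inverse mult.commute)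
  also have "\<dots> = q * exp (l * (1 - q)) + (1 - q) * exp (- l * q)"
    by (simp add: algebra_simps exp_diff[symmetric] exp_add[symmetric])
  finally show ?thesis by simp
next
  case False
  have pos: "1 + (1-q) * (exp (-l) - 1) > 0" using q False
    by (smt (verit) exp_ge_zero mult_nonneg_nonneg one_le_exp_iff)
  have "- (-l) * (1-q) + ln (1 + (1-q) * (exp (-l) - 1)) \<le> (-l)\<^sup>2 / 8"
    using Hoeffdings_lemma_aux[of "-l" "1-q"] False q by simp
  hence "exp (- (-l) * (1-q) + ln (1 + (1-q) * (exp (-l) - 1))) \<le> exp (l\<^sup>2 / 8)" by simp
  also have "exp (- (-l) * (1-q) + ln (1 + (1-q) * (exp (-l) - 1))) = exp (l*(1-q)) * (1 + (1-q) * (exp (-l) - 1))"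
    using pos by (simp add: exp_add)
  also have "\<dots> = q * exp (l * (1 - q)) + (1 - q) * exp (- l * q)"
    by (simp add: algebra_simps exp_diff[symmetric] exp_add[symmetric])
  finally show ?thesis by simp
qed

lemma tau_nonneg: "0 \<le> tau Dl d" by (simp add: tau_def)
lemma tau_le1: "tau Dl d \<le> 1" by (simp add: tau_def)
lemma tau_mono: "d \<le> d' \<Longrightarrow> tau Dl d \<le> tau Dl d'"
  unfolding tau_def by (intro measure_pmf.finite_measure_mono) auto

lemma expectation_Dl_if:
  fixes a b :: real
  shows "measure_pmf.expectation Dl (\<lambda>d. if d \<le> D then a else b) = a * tau Dl D + b * (1 - tau Dl D)"
proof -
  have "(\<lambda>d. if d \<le> D then a else b) = (\<lambda>d. b + (a - b) * indicator {..D} d)"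
    by (auto simp: indicator_def fun_eq_iff)
  then have "measure_pmf.expectation Dl (\<lambda>d. if d \<le> D then a else b) =
      measure_pmf.expectation Dl (\<lambda>d. b + (a - b) * indicator {..D} d)" by simp
  also have "\<dots> = b + (a - b) * tau Dl D"
  proof -
    have i: "integrable (measure_pmf Dl) (indicator {..D} :: nat \<Rightarrow> real)"
      by (rule integrable_pmf_bounded[where B=1]) (auto simp: indicator_def)
    have "measure_pmf.expectation Dl (indicator {..D} :: nat \<Rightarrow> real) = tau Dl D"
      unfolding tau_def by simp
    then show ?thesis using i by (simp add: Bochner_Integration.integral_add)
  qed
  finally show ?thesis by (simp add: algebra_simps)
qed

definition ind :: "bool \<Rightarrow> real" where "ind b = (if b then 1 else 0)"

lemma ind_simps[simp]: "ind True = 1" "ind False = 0" "0 \<le> ind b" "ind b \<le> 1"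
  by (auto simp: ind_def)

lemma hoeff_step:
  assumes p: "0 \<le> p" "p \<le> 1"
  shows "measure_pmf.expectation (bernoulli_pmf p) (\<lambda>c. measure_pmf.expectation Dl
           (\<lambda>d. exp (l * (ind (c \<and> d \<le> D) - p * tau Dl D)))) \<le> exp (l\<^sup>2 / 8)"
proof -
  let ?t = "tau Dl D"
  have e1: "measure_pmf.expectation Dl (\<lambda>d. exp (l * (ind (True \<and> d \<le> D) - p * ?t)))
     = exp (l * (1 - p * ?t)) * ?t + exp (l * (0 - p * ?t)) * (1 - ?t)"
  proof -
    have "(\<lambda>d. exp (l * (ind (True \<and> d \<le> D) - p * ?t))) = (\<lambda>d. if d \<le> D then exp (l * (1 - p * ?t)) else exp (l * (0 - p * ?t)))"
      by (auto simp: ind_def fun_eq_iff)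
    then show ?thesis by (simp only: expectation_Dl_if)
  qed
  have "measure_pmf.expectation (bernoulli_pmf p) (\<lambda>c. measure_pmf.expectation Dl
           (\<lambda>d. exp (l * (ind (c \<and> d \<le> D) - p * ?t)))) =
     (exp (l * (1 - p * ?t)) * ?t + exp (l * (0 - p * ?t)) * (1 - ?t)) * p + exp (l * (0 - p * ?t)) * (1 - p)"
    using p e1 by (simp add: ind_def)
  also have "\<dots> = (p * ?t) * exp (l * (1 - p * ?t)) + (1 - p * ?t) * exp (- l * (p * ?t))"
    by (simp add: algebra_simps)
  also have "\<dots> \<le> exp (l\<^sup>2 / 8)"
    by (rule hoeff_two_point) (use p tau_nonneg[of Dl D] tau_le1[of Dl D] in \<open>auto intro: mult_le_one\<close>)
  finally show ?thesis .
qed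

lemma mean_step:
  assumes p: "0 \<le> p" "p \<le> 1"
  shows "measure_pmf.expectation (bernoulli_pmf p) (\<lambda>c. measure_pmf.expectation Dl
           (\<lambda>d. ind (c \<and> d \<le> D))) = p * tau Dl D"
proof -
  have e1: "measure_pmf.expectation Dl (\<lambda>d. ind (True \<and> d \<le> D)) = tau Dl D"
  proof -
    have "(\<lambda>d. ind (True \<and> d \<le> D)) = (\<lambda>d. if d \<le> D then 1 else 0)"
      by (auto simp: ind_def fun_eq_iff)
    then show ?thesis by (simp add: expectation_Dl_if)
  qed
  show ?thesis using p e1 by (simp add: ind_def)
qed




definition pc :: "hist \<Rightarrow> nat \<Rightarrow> nat \<Rightarrow> nat" where
  "pc h k t = card {s\<in>{1..t-1}. arm h s = k}"

definition Zg :: "(nat \<Rightarrow> real) \<Rightarrow> nat pmf \<Rightarrow> nat \<Rightarrow> nat \<Rightarrow> (nat \<Rightarrow> nat) \<Rightarrow> hist \<Rightarrow> real" where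
  "Zg \<theta> Dl k n d h = (\<Sum>s\<in>{1..length h}. if arm h s = k \<and> pc h k s < n
      then ind (conv h s \<and> dly h s \<le> d s) - \<theta> k * tau Dl (d s) else 0)"

definition Cg :: "nat \<Rightarrow> nat \<Rightarrow> hist \<Rightarrow> real" where
  "Cg k n h = (\<Sum>s\<in>{1..length h}. if arm h s = k \<and> pc h k s < n then 1 else 0)"

definition Mg :: "(nat \<Rightarrow> real) \<Rightarrow> nat pmf \<Rightarrow> (nat \<Rightarrow> nat) \<Rightarrow> hist \<Rightarrow> real" where
  "Mg \<theta> Dl d h = (\<Sum>s\<in>{1..length h}. ind (conv h s \<and> dly h s \<le> d s) - \<theta> (arm h s) * tau Dl (d s))"

lemma snoc_arm: "s \<in> {1..length h} \<Longrightarrow> arm (h @ [x]) s = arm h s"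
  by (auto simp: arm_def nth_append)
lemma snoc_conv: "s \<in> {1..length h} \<Longrightarrow> conv (h @ [x]) s = conv h s"
  by (auto simp: conv_def nth_append)
lemma snoc_dly: "s \<in> {1..length h} \<Longrightarrow> dly (h @ [x]) s = dly h s"
  by (auto simp: dly_def nth_append)
lemma snoc_last: "arm (h @ [(a,c,d)]) (Suc (length h)) = a" "conv (h @ [(a,c,d)]) (Suc (length h)) = c"
  "dly (h @ [(a,c,d)]) (Suc (length h)) = d"
  by (auto simp: arm_def conv_def dly_def)

lemma snoc_pc: "s \<le> Suc (length h) \<Longrightarrow> pc (h @ [x]) k s = pc h k s"
  unfolding pc_def by (intro arg_cong[where f=card]) (auto simp: snoc_arm)

lemma sum_snoc:
  fixes g :: "nat \<Rightarrow> real"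
  shows "(\<Sum>s\<in>{1..Suc n}. g s) = (\<Sum>s\<in>{1..n}. g s) + g (Suc n)"
  by (simp add: sum.cl_ivl_Suc)

lemma Zg_snoc: "Zg \<theta> Dl k n d (h @ [(a,c,dd)]) = Zg \<theta> Dl k n d h +
   (if a = k \<and> pc h k (Suc (length h)) < n then ind (c \<and> dd \<le> d (Suc (length h))) - \<theta> k * tau Dl (d (Suc (length h))) else 0)"
proof -
  have "Zg \<theta> Dl k n d (h @ [(a,c,dd)]) = (\<Sum>s\<in>{1..length h}. if arm (h @ [(a,c,dd)]) s = k \<and> pc (h @ [(a,c,dd)]) k s < n
      then ind (conv (h @ [(a,c,dd)]) s \<and> dly (h @ [(a,c,dd)]) s \<le> d s) - \<theta> k * tau Dl (d s) else 0) +
      (if a = k \<and> pc h k (Suc (length h)) < n then ind (c \<and> dd \<le> d (Suc (length h))) - \<theta> k * tau Dl (d (Suc (length h))) else 0)"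
    unfolding Zg_def by (simp add: sum_snoc snoc_last snoc_pc)
  also have "(\<Sum>s\<in>{1..length h}. if arm (h @ [(a,c,dd)]) s = k \<and> pc (h @ [(a,c,dd)]) k s < n
      then ind (conv (h @ [(a,c,dd)]) s \<and> dly (h @ [(a,c,dd)]) s \<le> d s) - \<theta> k * tau Dl (d s) else 0) = Zg \<theta> Dl k n d h"
    unfolding Zg_def by (intro sum.cong refl) (auto simp: snoc_arm snoc_conv snoc_dly snoc_pc)
  finally show ?thesis .
qed

lemma Cg_snoc: "Cg k n (h @ [(a,c,dd)]) = Cg k n h + (if a = k \<and> pc h k (Suc (length h)) < n then 1 else 0)"
proof -
  have "Cg k n (h @ [(a,c,dd)]) = (\<Sum>s\<in>{1..length h}. if arm (h @ [(a,c,dd)]) s = k \<and> pc (h @ [(a,c,dd)]) k s < n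
      then 1 else 0) + (if a = k \<and> pc h k (Suc (length h)) < n then 1 else 0)"
    unfolding Cg_def by (simp add: sum_snoc snoc_last snoc_pc)
  also have "(\<Sum>s\<in>{1..length h}. if arm (h @ [(a,c,dd)]) s = k \<and> pc (h @ [(a,c,dd)]) k s < n
      then 1 else 0) = Cg k n h"
    unfolding Cg_def by (intro sum.cong refl) (auto simp: snoc_arm snoc_pc)
  finally show ?thesis .
qed

lemma Mg_snoc: "Mg \<theta> Dl d (h @ [(a,c,dd)]) = Mg \<theta> Dl d h +
   (ind (c \<and> dd \<le> d (Suc (length h))) - \<theta> a * tau Dl (d (Suc (length h))))"
proof -
  have "Mg \<theta> Dl d (h @ [(a,c,dd)]) = (\<Sum>s\<in>{1..length h}. ind (conv (h @ [(a,c,dd)]) s \<and> dly (h @ [(a,c,dd)]) s \<le> d s)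
       - \<theta> (arm (h @ [(a,c,dd)]) s) * tau Dl (d s)) +
      (ind (c \<and> dd \<le> d (Suc (length h))) - \<theta> a * tau Dl (d (Suc (length h))))"
    unfolding Mg_def by (simp add: sum_snoc snoc_last)
  also have "(\<Sum>s\<in>{1..length h}. ind (conv (h @ [(a,c,dd)]) s \<and> dly (h @ [(a,c,dd)]) s \<le> d s)
       - \<theta> (arm (h @ [(a,c,dd)]) s) * tau Dl (d s)) = Mg \<theta> Dl d h"
    unfolding Mg_def by (intro sum.cong refl) (auto simp: snoc_arm snoc_conv snoc_dly)
  finally show ?thesis .
qed

lemma Zg_bound:
  assumes "0 \<le> \<theta> k" "\<theta> k \<le> 1"
  shows "\<bar>Zg \<theta> Dl k n d h\<bar> \<le> length h"
proof -
  have "\<bar>Zg \<theta> Dl k n d h\<bar> \<le> (\<Sum>s\<in>{1..length h}. \<bar>if arm h s = k \<and> pc h k s < n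
      then ind (conv h s \<and> dly h s \<le> d s) - \<theta> k * tau Dl (d s) else 0\<bar>)"
    unfolding Zg_def by (rule sum_abs)
  also have "\<dots> \<le> (\<Sum>s\<in>{1..length h}. 1)"
  proof (intro sum_mono)
    fix s
    have "0 \<le> \<theta> k * tau Dl (d s)" "\<theta> k * tau Dl (d s) \<le> 1"
      using assms tau_nonneg[of Dl "d s"] tau_le1[of Dl "d s"] by (auto intro: mult_le_one)
    then show "\<bar>if arm h s = k \<and> pc h k s < n then ind (conv h s \<and> dly h s \<le> d s) - \<theta> k * tau Dl (d s) else 0\<bar> \<le> 1"
      by (auto simp: ind_def)
  qed
  finally show ?thesis by simp
qed

lemma Cg_bound: "0 \<le> Cg k n h" "Cg k n h \<le> length h"
proof -
  show "0 \<le> Cg k n h" unfolding Cg_def by (intro sum_nonneg) auto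
  have "Cg k n h \<le> (\<Sum>s\<in>{1..length h}. 1)" unfolding Cg_def by (intro sum_mono) auto
  then show "Cg k n h \<le> length h" by simp
qed

lemma Mg_bound:
  assumes "\<And>s. 0 \<le> \<theta> (arm h s) \<and> \<theta> (arm h s) \<le> 1"
  shows "\<bar>Mg \<theta> Dl d h\<bar> \<le> length h"
proof -
  have "\<bar>Mg \<theta> Dl d h\<bar> \<le> (\<Sum>s\<in>{1..length h}. \<bar>ind (conv h s \<and> dly h s \<le> d s) - \<theta> (arm h s) * tau Dl (d s)\<bar>)"
    unfolding Mg_def by (rule sum_abs)
  also have "\<dots> \<le> (\<Sum>s\<in>{1..length h}. 1)"
  proof (intro sum_mono)
    fix s
    have "0 \<le> \<theta> (arm h s) * tau Dl (d s)" "\<theta> (arm h s) * tau Dl (d s) \<le> 1"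
      using assms[of s] tau_nonneg[of Dl "d s"] tau_le1[of Dl "d s"] by (auto intro: mult_le_one)
    then show "\<bar>ind (conv h s \<and> dly h s \<le> d s) - \<theta> (arm h s) * tau Dl (d s)\<bar> \<le> 1"
      by (auto simp: ind_def)
  qed
  finally show ?thesis by simp
qed




lemma expectation_cd_mult:
  fixes G :: "bool \<Rightarrow> nat \<Rightarrow> real"
  shows "measure_pmf.expectation (bernoulli_pmf p) (\<lambda>c. measure_pmf.expectation Dl (\<lambda>d. a * G c d)) =
     a * measure_pmf.expectation (bernoulli_pmf p) (\<lambda>c. measure_pmf.expectation Dl (\<lambda>d. G c d))"
  by simp

lemma supermart:
  assumes th: "0 \<le> \<theta> k" "\<theta> k \<le> 1"
  shows "measure_pmf.expectation (hist_pmf \<theta> Dl pol j)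
     (\<lambda>h. exp (l * Zg \<theta> Dl k n d h - l\<^sup>2 / 8 * Cg k n h)) \<le> 1"
proof (induction j)
  case 0
  then show ?case by (simp add: Zg_def Cg_def)
next
  case (Suc j)
  define F where "F = (\<lambda>h. exp (l * Zg \<theta> Dl k n d h - l\<^sup>2 / 8 * Cg k n h))"
  have Fb: "\<bar>F h\<bar> \<le> exp (\<bar>l\<bar> * length h)" for h
  proof -
    have "l * Zg \<theta> Dl k n d h \<le> \<bar>l\<bar> * length h"
    proof -
      have "l * Zg \<theta> Dl k n d h \<le> \<bar>l\<bar> * \<bar>Zg \<theta> Dl k n d h\<bar>" by (metis abs_ge_self abs_mult)
      also have "\<dots> \<le> \<bar>l\<bar> * length h" using Zg_bound[of \<theta> k Dl n d h] th by (intro mult_left_mono) auto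
      finally show ?thesis .
    qed
    moreover have "0 \<le> l\<^sup>2 / 8 * Cg k n h" using Cg_bound(1)[of k n h] by simp
    ultimately show ?thesis by (simp add: F_def)
  qed
  have step: "measure_pmf.expectation (bernoulli_pmf (\<theta> (pol h))) (\<lambda>c.
        measure_pmf.expectation Dl (\<lambda>dd. F (h @ [(pol h, c, dd)]))) \<le> F h" for h
  proof -
    define D where "D = d (Suc (length h))"
    define cnd where "cnd = (pol h = k \<and> pc h k (Suc (length h)) < n)"
    have eq: "F (h @ [(pol h, c, dd)]) = F h * (if cnd then exp (l * (ind (c \<and> dd \<le> D) - \<theta> k * tau Dl D)) * exp (- (l\<^sup>2 / 8)) else 1)" for c dd
      unfolding F_def Zg_snoc Cg_snoc D_def[symmetric] cnd_def[symmetric]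
      by (auto simp: exp_add[symmetric] exp_diff[symmetric] algebra_simps)
    show ?thesis
    proof (cases cnd)
      case True
      then have pk: "pol h = k" by (simp add: cnd_def)
      have "measure_pmf.expectation (bernoulli_pmf (\<theta> (pol h))) (\<lambda>c.
          measure_pmf.expectation Dl (\<lambda>dd. F (h @ [(pol h, c, dd)]))) =
          F h * exp (- (l\<^sup>2 / 8)) * measure_pmf.expectation (bernoulli_pmf (\<theta> k)) (\<lambda>c.
          measure_pmf.expectation Dl (\<lambda>dd. exp (l * (ind (c \<and> dd \<le> D) - \<theta> k * tau Dl D))))"
        unfolding eq using True pk by (simp add: mult.assoc mult.left_commute)
      also have "\<dots> \<le> F h * exp (- (l\<^sup>2 / 8)) * exp (l\<^sup>2 / 8)"
        by (intro mult_left_mono hoeff_step th) (auto simp: F_def)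
      also have "\<dots> = F h" by (simp add: mult.assoc exp_add[symmetric])
      finally show ?thesis .
    next
      case False
      then show ?thesis unfolding eq by simp
    qed
  qed
  have nonneg: "0 \<le> measure_pmf.expectation (bernoulli_pmf (\<theta> (pol h))) (\<lambda>c.
        measure_pmf.expectation Dl (\<lambda>dd. F (h @ [(pol h, c, dd)])))" for h
    by (intro integral_nonneg_AE AE_I2) (auto simp: F_def)
  have "measure_pmf.expectation (hist_pmf \<theta> Dl pol (Suc j)) F =
    measure_pmf.expectation (hist_pmf \<theta> Dl pol j) (\<lambda>h.
      measure_pmf.expectation (bernoulli_pmf (\<theta> (pol h))) (\<lambda>c.
        measure_pmf.expectation Dl (\<lambda>dd. F (h @ [(pol h, c, dd)]))))"
    by (rule hist_bounded_step[where B="exp (\<bar>l\<bar> * Suc j)"]) (metis Fb hist_support)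
  also have "\<dots> \<le> measure_pmf.expectation (hist_pmf \<theta> Dl pol j) F"
  proof (rule expectation_pmf_le[where B="exp (\<bar>l\<bar> * j)" and B'="exp (\<bar>l\<bar> * j)"])
    fix h assume h: "h \<in> set_pmf (hist_pmf \<theta> Dl pol j)"
    then have lh: "length h = j" using hist_support by blast
    show "\<bar>F h\<bar> \<le> exp (\<bar>l\<bar> * j)" using Fb[of h] lh by simp
    then show "\<bar>measure_pmf.expectation (bernoulli_pmf (\<theta> (pol h))) (\<lambda>c.
        measure_pmf.expectation Dl (\<lambda>dd. F (h @ [(pol h, c, dd)])))\<bar> \<le> exp (\<bar>l\<bar> * j)"
      using step[of h] nonneg[of h] by linarith
  qed (rule step)
  also have "\<dots> \<le> 1" using Suc.IH by (simp add: F_def)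
  finally show ?case by (simp add: F_def)
qed

lemma mart:
  assumes th: "\<And>h. 0 \<le> \<theta> (pol h) \<and> \<theta> (pol h) \<le> 1"
  shows "measure_pmf.expectation (hist_pmf \<theta> Dl pol j) (Mg \<theta> Dl d) = 0"
proof (induction j)
  case 0
  then show ?case by (simp add: Mg_def)
next
  case (Suc j)
  have thh: "0 \<le> \<theta> (arm h s) \<and> \<theta> (arm h s) \<le> 1" if "h \<in> set_pmf (hist_pmf \<theta> Dl pol j')" "s \<in> {1..length h}" for h s j'
    using hist_support[OF that(1)] that(2) th by auto
  have "measure_pmf.expectation (hist_pmf \<theta> Dl pol (Suc j)) (Mg \<theta> Dl d) =
    measure_pmf.expectation (hist_pmf \<theta> Dl pol j) (\<lambda>h.
      measure_pmf.expectation (bernoulli_pmf (\<theta> (pol h))) (\<lambda>c.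
        measure_pmf.expectation Dl (\<lambda>dd. Mg \<theta> Dl d (h @ [(pol h, c, dd)]))))"
  proof (rule hist_bounded_step[where B="Suc j"])
    fix x assume x: "x \<in> set_pmf (hist_pmf \<theta> Dl pol (Suc j))"
    have "\<bar>Mg \<theta> Dl d x\<bar> \<le> (\<Sum>s\<in>{1..length x}. \<bar>ind (conv x s \<and> dly x s \<le> d s) - \<theta> (arm x s) * tau Dl (d s)\<bar>)"
      unfolding Mg_def by (rule sum_abs)
    also have "\<dots> \<le> (\<Sum>s\<in>{1..length x}. 1)"
    proof (intro sum_mono)
      fix s assume s: "s \<in> {1..length x}"
      have "0 \<le> \<theta> (arm x s) * tau Dl (d s)" "\<theta> (arm x s) * tau Dl (d s) \<le> 1"
        using thh[OF x s] tau_nonneg[of Dl "d s"] tau_le1[of Dl "d s"] by (auto intro: mult_le_one)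
      then show "\<bar>ind (conv x s \<and> dly x s \<le> d s) - \<theta> (arm x s) * tau Dl (d s)\<bar> \<le> 1"
        by (auto simp: ind_def)
    qed
    finally show "\<bar>Mg \<theta> Dl d x\<bar> \<le> real (Suc j)" using hist_support[OF x] by simp
  qed
  also have "\<dots> = measure_pmf.expectation (hist_pmf \<theta> Dl pol j) (Mg \<theta> Dl d)"
  proof (intro integral_cong_AE, simp, simp, unfold AE_measure_pmf_iff, intro ballI)
    fix h assume h: "h \<in> set_pmf (hist_pmf \<theta> Dl pol j)"
    define D where "D = d (Suc (length h))"
    have i1: "integrable (measure_pmf Dl) (\<lambda>dd. ind (c \<and> dd \<le> D))" for c
      by (rule integrable_pmf_bounded[where B=1]) (auto simp: ind_def)
    have "measure_pmf.expectation (bernoulli_pmf (\<theta> (pol h))) (\<lambda>c.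
        measure_pmf.expectation Dl (\<lambda>dd. Mg \<theta> Dl d (h @ [(pol h, c, dd)]))) =
        measure_pmf.expectation (bernoulli_pmf (\<theta> (pol h))) (\<lambda>c.
        Mg \<theta> Dl d h - \<theta> (pol h) * tau Dl D + measure_pmf.expectation Dl (\<lambda>dd. ind (c \<and> dd \<le> D)))"
      unfolding Mg_snoc D_def[symmetric] using i1
      by (simp add: Bochner_Integration.integral_add Bochner_Integration.integral_diff algebra_simps)
    also have "\<dots> = Mg \<theta> Dl d h - \<theta> (pol h) * tau Dl D + measure_pmf.expectation (bernoulli_pmf (\<theta> (pol h))) (\<lambda>c.
          measure_pmf.expectation Dl (\<lambda>dd. ind (c \<and> dd \<le> D)))"
      using th[of h] by (simp add: ind_def algebra_simps)
    also have "\<dots> = Mg \<theta> Dl d h"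
      using mean_step[of "\<theta> (pol h)" Dl D] th[of h] by simp
    finally show "measure_pmf.expectation (bernoulli_pmf (\<theta> (pol h))) (\<lambda>c.
        measure_pmf.expectation Dl (\<lambda>dd. Mg \<theta> Dl d (h @ [(pol h, c, dd)]))) = Mg \<theta> Dl d h" .
  qed
  finally show ?case using Suc.IH by simp
qed




lemma pc_less: "s < s' \<Longrightarrow> 1 \<le> s \<Longrightarrow> arm h s = k \<Longrightarrow> pc h k s < pc h k s'"
proof -
  assume a: "s < s'" "1 \<le> s" "arm h s = k"
  have "{x\<in>{1..s-1}. arm h x = k} \<subset> {x\<in>{1..s'-1}. arm h x = k}"
  proof
    show "{x\<in>{1..s-1}. arm h x = k} \<subseteq> {x\<in>{1..s'-1}. arm h x = k}" using a by auto
    have "s \<in> {x\<in>{1..s'-1}. arm h x = k}" "s \<notin> {x\<in>{1..s-1}. arm h x = k}" using a by auto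
    then show "{x\<in>{1..s-1}. arm h x = k} \<noteq> {x\<in>{1..s'-1}. arm h x = k}" by blast
  qed
  then show ?thesis unfolding pc_def by (intro psubset_card_mono) auto
qed

lemma pc_mono: "s \<le> s' \<Longrightarrow> pc h k s \<le> pc h k s'"
  unfolding pc_def by (intro card_mono) auto

lemma pc_inj: "inj_on (pc h k) {s. 1 \<le> s \<and> arm h s = k}"
  by (intro inj_onI) (metis (mono_tags) mem_Collect_eq linorder_neqE_nat pc_less less_irrefl)

lemma Cg_le_n: "Cg k n h \<le> n"
proof -
  have e: "{s\<in>{1..length h}. arm h s = k \<and> pc h k s < n} = {1..length h} \<inter> {s. arm h s = k \<and> pc h k s < n}"
    by auto
  have "Cg k n h = card {s\<in>{1..length h}. arm h s = k \<and> pc h k s < n}"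
    unfolding Cg_def e by (simp add: sum.If_cases)
  also have "card {s\<in>{1..length h}. arm h s = k \<and> pc h k s < n} \<le> card {..<n}"
    by (rule card_inj_on_le[where f="pc h k"]) (auto intro: inj_on_subset[OF pc_inj])
  finally show ?thesis by simp
qed

lemma chernoff_gen:
  assumes th: "0 \<le> \<theta> k" "\<theta> k \<le> 1" and c: "0 \<le> c"
    and P: "\<And>h. P h \<Longrightarrow> 1 \<le> exp (l * Zg \<theta> Dl k n d h - l\<^sup>2 / 8 * Cg k n h) * c"
  shows "measure_pmf.expectation (hist_pmf \<theta> Dl pol j) (\<lambda>h. ind (P h)) \<le> c"
proof -
  have Fb: "\<bar>exp (l * Zg \<theta> Dl k n d h - l\<^sup>2 / 8 * Cg k n h) * c\<bar> \<le> exp (\<bar>l\<bar> * length h) * c" for h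
  proof -
    have "l * Zg \<theta> Dl k n d h \<le> \<bar>l\<bar> * \<bar>Zg \<theta> Dl k n d h\<bar>" by (metis abs_ge_self abs_mult)
    also have "\<dots> \<le> \<bar>l\<bar> * length h" using Zg_bound[of \<theta> k Dl n d h] th by (intro mult_left_mono) auto
    finally have "l * Zg \<theta> Dl k n d h \<le> \<bar>l\<bar> * length h" .
    moreover have "0 \<le> l\<^sup>2 / 8 * Cg k n h" using Cg_bound(1)[of k n h] by simp
    ultimately show ?thesis using c by (simp add: abs_mult mult_right_mono)
  qed
  have "measure_pmf.expectation (hist_pmf \<theta> Dl pol j) (\<lambda>h. ind (P h)) \<le>
        measure_pmf.expectation (hist_pmf \<theta> Dl pol j) (\<lambda>h. exp (l * Zg \<theta> Dl k n d h - l\<^sup>2 / 8 * Cg k n h) * c)"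
  proof (rule expectation_pmf_le[where B=1 and B'="exp (\<bar>l\<bar> * j) * c"])
    fix h assume h: "h \<in> set_pmf (hist_pmf \<theta> Dl pol j)"
    show "\<bar>ind (P h)\<bar> \<le> 1" by (simp add: ind_def)
    show "ind (P h) \<le> exp (l * Zg \<theta> Dl k n d h - l\<^sup>2 / 8 * Cg k n h) * c"
      using P[of h] c by (auto simp: ind_def)
    show "\<bar>exp (l * Zg \<theta> Dl k n d h - l\<^sup>2 / 8 * Cg k n h) * c\<bar> \<le> exp (\<bar>l\<bar> * j) * c"
      using Fb[of h] hist_support[OF h] by simp
  qed
  also have "\<dots> = measure_pmf.expectation (hist_pmf \<theta> Dl pol j) (\<lambda>h. exp (l * Zg \<theta> Dl k n d h - l\<^sup>2 / 8 * Cg k n h)) * c"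
    by simp
  also have "\<dots> \<le> 1 * c" by (intro mult_right_mono supermart th c)
  finally show ?thesis by simp
qed

lemma chernoff_upper:
  assumes th: "0 \<le> \<theta> k" "\<theta> k \<le> 1" and a: "0 \<le> a"
  shows "measure_pmf.expectation (hist_pmf \<theta> Dl pol j) (\<lambda>h. ind (Zg \<theta> Dl k n d h \<ge> a)) \<le> exp (- 2 * a\<^sup>2 / n)"
proof (cases "n = 0")
  case True
  have "measure_pmf.expectation (hist_pmf \<theta> Dl pol j) (\<lambda>h. ind (Zg \<theta> Dl k n d h \<ge> a)) \<le> 1"
    by (rule expectation_pmf_le_const[where B=1]) (auto simp: ind_def)
  then show ?thesis using True by simp
next
  case False
  define l where "l = 4 * a / n"
  have l0: "0 \<le> l" using a by (simp add: l_def)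
  show ?thesis
  proof (rule chernoff_gen[where \<theta>=\<theta> and k=k, OF th, where l=l and P="\<lambda>h. Zg \<theta> Dl k n d h \<ge> a"])
    fix h assume Z: "a \<le> Zg \<theta> Dl k n d h"
    have "0 \<le> l * (Zg \<theta> Dl k n d h - a) + l\<^sup>2 / 8 * (n - Cg k n h)"
      using Z l0 Cg_le_n[of k n h] by (intro add_nonneg_nonneg mult_nonneg_nonneg) auto
    also have "\<dots> = (l * Zg \<theta> Dl k n d h - l\<^sup>2 / 8 * Cg k n h) + (- 2 * a\<^sup>2 / n)"
      using False by (simp add: l_def power2_eq_square field_simps)
    finally have "1 \<le> exp ((l * Zg \<theta> Dl k n d h - l\<^sup>2 / 8 * Cg k n h) + (- 2 * a\<^sup>2 / n))" by simp
    then show "1 \<le> exp (l * Zg \<theta> Dl k n d h - l\<^sup>2 / 8 * Cg k n h) * exp (- 2 * a\<^sup>2 / n)"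
      by (simp only: exp_add[symmetric])
  qed simp
qed

lemma chernoff_lower:
  assumes th: "0 \<le> \<theta> k" "\<theta> k \<le> 1" and a: "0 \<le> a"
  shows "measure_pmf.expectation (hist_pmf \<theta> Dl pol j) (\<lambda>h. ind (Zg \<theta> Dl k n d h \<le> - a)) \<le> exp (- 2 * a\<^sup>2 / n)"
proof (cases "n = 0")
  case True
  have "measure_pmf.expectation (hist_pmf \<theta> Dl pol j) (\<lambda>h. ind (Zg \<theta> Dl k n d h \<le> - a)) \<le> 1"
    by (rule expectation_pmf_le_const[where B=1]) (auto simp: ind_def)
  then show ?thesis using True by simp
next
  case False
  define l where "l = - 4 * a / n"
  have l0: "l \<le> 0" using a by (simp add: l_def)
  show ?thesis
  proof (rule chernoff_gen[where \<theta>=\<theta> and k=k, OF th, where l=l and P="\<lambda>h. Zg \<theta> Dl k n d h \<le> - a"])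
    fix h assume Z: "Zg \<theta> Dl k n d h \<le> - a"
    have "0 \<le> (-l) * (- a - Zg \<theta> Dl k n d h) + l\<^sup>2 / 8 * (n - Cg k n h)"
      using Z l0 Cg_le_n[of k n h] by (intro add_nonneg_nonneg mult_nonneg_nonneg) auto
    also have "\<dots> = (l * Zg \<theta> Dl k n d h - l\<^sup>2 / 8 * Cg k n h) + (- 2 * a\<^sup>2 / n)"
      using False by (simp add: l_def power2_eq_square field_simps)
    finally have "1 \<le> exp ((l * Zg \<theta> Dl k n d h - l\<^sup>2 / 8 * Cg k n h) + (- 2 * a\<^sup>2 / n))" by simp
    then show "1 \<le> exp (l * Zg \<theta> Dl k n d h - l\<^sup>2 / 8 * Cg k n h) * exp (- 2 * a\<^sup>2 / n)"
      by (simp only: exp_add[symmetric])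
  qed simp
qed




lemma Sk_sum: "Sk m h k t = (\<Sum>s\<in>{1..t-1}. if arm h s = k then ind (conv h s \<and> dly h s \<le> min (t - s) m) else 0)"
proof -
  have e: "{s\<in>{1..t-1}. arm h s = k \<and> conv h s \<and> dly h s \<le> min (t - s) m} =
     {1..t-1} \<inter> {s. arm h s = k \<and> conv h s \<and> dly h s \<le> min (t - s) m}" by auto
  show ?thesis unfolding Sk_def e
    by (simp add: sum.If_cases ind_def Int_def)
qed

lemma Ntil_sum:
  assumes m: "1 \<le> m"
  shows "Ntil Dl m h k t = (\<Sum>s\<in>{1..t-1}. if arm h s = k then tau Dl (min (t - s) m) else 0)"
proof (cases "t \<le> m")
  case True
  have a: "{t - m + 1..t - 1} = {1..t-1}" using True by simp
  have "{1..t - m} = {}" using True by simp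
  then have "Ntil Dl m h k t = (\<Sum>s\<in>{1..t-1}. if arm h s = k then tau Dl (t - s) else 0)"
    unfolding Ntil_def a by simp
  also have "\<dots> = (\<Sum>s\<in>{1..t-1}. if arm h s = k then tau Dl (min (t - s) m) else 0)"
    by (intro sum.cong refl) (use True in auto)
  finally show ?thesis .
next
  case False
  have split: "{1..t-1} = {1..t-m} \<union> {t-m+1..t-1}" using False m by auto
  have disj: "{1..t-m} \<inter> {t-m+1..t-1} = {}" by auto
  have c: "tau Dl m * real (card {s \<in> {1..t-m}. arm h s = k}) = (\<Sum>s\<in>{1..t-m}. if arm h s = k then tau Dl (min (t - s) m) else 0)"
  proof -
    have e: "{s \<in> {1..t-m}. arm h s = k} = {1..t-m} \<inter> {s. arm h s = k}" by auto
    have "(\<Sum>s\<in>{1..t-m}. if arm h s = k then tau Dl (min (t - s) m) else 0) = (\<Sum>s\<in>{1..t-m}. if arm h s = k then tau Dl m else 0)"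
      by (intro sum.cong refl) (use False in auto)
    also have "\<dots> = tau Dl m * real (card {s \<in> {1..t-m}. arm h s = k})"
      unfolding e by (simp add: sum.If_cases Int_def)
    finally show ?thesis by simp
  qed
  have d: "(\<Sum>s\<in>{t-m+1..t-1}. if arm h s = k then tau Dl (t - s) else 0) = (\<Sum>s\<in>{t-m+1..t-1}. if arm h s = k then tau Dl (min (t - s) m) else 0)"
    by (intro sum.cong refl) (use False in auto)
  show ?thesis unfolding Ntil_def c d split by (rule sum.union_disjoint[symmetric]) (use disj in auto)
qed

lemma Zg_window:
  assumes len: "t - 1 \<le> length h" and n: "pc h k t = n"
  shows "Zg \<theta> Dl k n d h = (\<Sum>s\<in>{1..t-1}. if arm h s = k then ind (conv h s \<and> dly h s \<le> d s) - \<theta> k * tau Dl (d s) else 0)"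
proof -
  have "Zg \<theta> Dl k n d h = (\<Sum>s\<in>{1..length h}. if s \<in> {1..t-1} then (if arm h s = k then ind (conv h s \<and> dly h s \<le> d s) - \<theta> k * tau Dl (d s) else 0) else 0)"
    unfolding Zg_def
  proof (intro sum.cong refl)
    fix s assume s: "s \<in> {1..length h}"
    show "(if arm h s = k \<and> pc h k s < n then ind (conv h s \<and> dly h s \<le> d s) - \<theta> k * tau Dl (d s) else 0) =
      (if s \<in> {1..t-1} then (if arm h s = k then ind (conv h s \<and> dly h s \<le> d s) - \<theta> k * tau Dl (d s) else 0) else 0)"
    proof (cases "s \<le> t - 1")
      case True
      then have "arm h s = k \<Longrightarrow> pc h k s < n" using n pc_less[of s t h k] s by auto
      then show ?thesis using True s by auto
    next
      case False
      then have "pc h k s \<ge> n" using n pc_mono[of t s h k] by auto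
      then show ?thesis using False by auto
    qed
  qed
  also have "\<dots> = (\<Sum>s\<in>{1..length h} \<inter> {1..t-1}. if arm h s = k then ind (conv h s \<and> dly h s \<le> d s) - \<theta> k * tau Dl (d s) else 0)"
    by (rule sum.inter_restrict[symmetric]) simp
  also have "{1..length h} \<inter> {1..t-1} = {1..t-1}" using len by auto
  finally show ?thesis .
qed

lemma W_eq:
  assumes m: "1 \<le> m" and len: "t - 1 \<le> length h" and n: "pc h k t = n"
  shows "Zg \<theta> Dl k n (\<lambda>s. min (t - s) m) h = Sk m h k t - \<theta> k * Ntil Dl m h k t"
  unfolding Zg_window[OF len n] Sk_sum Ntil_sum[OF m] sum_distrib_left sum_subtractf[symmetric]
  by (intro sum.cong refl) auto

lemma card_window: "card {s\<in>{1..t-1}. t < s + m} \<le> m - 1"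
proof -
  have "{s\<in>{1..t-1}. t < s + m} \<subseteq> {t+1-m..<t}" by auto
  then have "card {s\<in>{1..t-1}. t < s + m} \<le> card {t+1-m..<t}" by (intro card_mono) auto
  also have "\<dots> \<le> m - 1" by simp
  finally show ?thesis .
qed

lemma pc_split: "pc h k t \<le> card {s\<in>{1..t-1}. arm h s = k \<and> s + m \<le> t} + (m - 1)"
proof -
  have "{s\<in>{1..t-1}. arm h s = k} \<subseteq> {s\<in>{1..t-1}. arm h s = k \<and> s + m \<le> t} \<union> {s\<in>{1..t-1}. t < s + m}" by auto
  then have "pc h k t \<le> card ({s\<in>{1..t-1}. arm h s = k \<and> s + m \<le> t} \<union> {s\<in>{1..t-1}. t < s + m})"
    unfolding pc_def by (intro card_mono) auto
  also have "\<dots> \<le> card {s\<in>{1..t-1}. arm h s = k \<and> s + m \<le> t} + card {s\<in>{1..t-1}. t < s + m}"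
    by (rule card_Un_le)
  finally show ?thesis using card_window[of t m] by linarith
qed

lemma Ntil_upper:
  assumes m: "1 \<le> m"
  shows "Ntil Dl m h k t \<le> tau Dl m * pc h k t"
proof -
  have "Ntil Dl m h k t \<le> (\<Sum>s\<in>{1..t-1}. if arm h s = k then tau Dl m else 0)"
    unfolding Ntil_sum[OF m] by (intro sum_mono) (auto intro: tau_mono)
  also have "\<dots> = tau Dl m * pc h k t"
  proof -
    have e: "{s \<in> {1..t-1}. arm h s = k} = {1..t-1} \<inter> {s. arm h s = k}" by auto
    show ?thesis unfolding pc_def e by (simp add: sum.If_cases Int_def)
  qed
  finally show ?thesis .
qed

lemma Ntil_lower:
  assumes m: "1 \<le> m"
  shows "Ntil Dl m h k t \<ge> tau Dl m * card {s\<in>{1..t-1}. arm h s = k \<and> s + m \<le> t}"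
proof -
  have e: "{s\<in>{1..t-1}. arm h s = k \<and> s + m \<le> t} = {1..t-1} \<inter> {s. arm h s = k \<and> s + m \<le> t}" by auto
  have "tau Dl m * card {s\<in>{1..t-1}. arm h s = k \<and> s + m \<le> t} = (\<Sum>s\<in>{1..t-1}. if arm h s = k \<and> s + m \<le> t then tau Dl m else 0)"
    unfolding e by (simp add: sum.If_cases Int_def)
  also have "\<dots> \<le> Ntil Dl m h k t"
    unfolding Ntil_sum[OF m] by (intro sum_mono) (auto simp: tau_nonneg)
  finally show ?thesis .
qed

lemma Ntil_lower2:
  assumes m: "1 \<le> m"
  shows "Ntil Dl m h k t \<ge> tau Dl m * (real (pc h k t) - (real m - 1))"
proof -
  have "real (pc h k t) - (real m - 1) \<le> card {s\<in>{1..t-1}. arm h s = k \<and> s + m \<le> t}"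
    using pc_split[where h=h and k=k and t=t and m=m] m by linarith
  then have "tau Dl m * (real (pc h k t) - (real m - 1)) \<le> tau Dl m * card {s\<in>{1..t-1}. arm h s = k \<and> s + m \<le> t}"
    by (intro mult_left_mono tau_nonneg)
  then show ?thesis using Ntil_lower[OF m, where Dl=Dl and h=h and k=k and t=t] by linarith
qed

lemma Zm_vs_W:
  assumes m: "1 \<le> m" and len: "t - 1 \<le> length h" and n: "pc h k t = n" and th: "0 \<le> \<theta> k" "\<theta> k \<le> 1"
  shows "Zg \<theta> Dl k n (\<lambda>_. m) h \<ge> Zg \<theta> Dl k n (\<lambda>s. min (t - s) m) h - (real m - 1)"
proof -
  have "Zg \<theta> Dl k n (\<lambda>_. m) h - Zg \<theta> Dl k n (\<lambda>s. min (t - s) m) h =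
     (\<Sum>s\<in>{1..t-1}. (if arm h s = k then ind (conv h s \<and> dly h s \<le> m) - \<theta> k * tau Dl m else 0) -
        (if arm h s = k then ind (conv h s \<and> dly h s \<le> min (t-s) m) - \<theta> k * tau Dl (min (t-s) m) else 0))"
    unfolding Zg_window[OF len n] by (simp add: sum_subtractf)
  also have "\<dots> \<ge> (\<Sum>s\<in>{1..t-1}. if t < s + m then -1 else 0)"
  proof (intro sum_mono)
    fix s assume s: "s \<in> {1..t-1}"
    have t1: "\<theta> k * tau Dl m - \<theta> k * tau Dl (min (t-s) m) \<le> 1"
      using th tau_nonneg[of Dl "min (t-s) m"] tau_le1[of Dl m] by (smt (verit) mult_left_le mult_nonneg_nonneg)
    have t2: "ind (conv h s \<and> dly h s \<le> min (t-s) m) \<le> ind (conv h s \<and> dly h s \<le> m)"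
      by (auto simp: ind_def)
    show "(if t < s + m then -1 else 0) \<le> (if arm h s = k then ind (conv h s \<and> dly h s \<le> m) - \<theta> k * tau Dl m else 0) -
        (if arm h s = k then ind (conv h s \<and> dly h s \<le> min (t-s) m) - \<theta> k * tau Dl (min (t-s) m) else 0)"
    proof (cases "t < s + m")
      case True then show ?thesis using t1 t2 by auto
    next
      case False
      then have mm: "min (t-s) m = m" by simp
      show ?thesis by (simp only: mm False if_False)
    qed
  qed
  finally have "Zg \<theta> Dl k n (\<lambda>_. m) h - Zg \<theta> Dl k n (\<lambda>s. min (t - s) m) h \<ge> - real (card {s\<in>{1..t-1}. t < s + m})"
  proof -
    have e: "{s\<in>{1..t-1}. t < s + m} = {1..t-1} \<inter> {s. t < s + m}" by auto
    have "(\<Sum>s\<in>{1..t-1}. if t < s + m then -1 else 0) = - real (card {s\<in>{1..t-1}. t < s + m})"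
      unfolding e by (simp add: sum.If_cases Int_def)
    then show "(\<Sum>s\<in>{1..t-1}. if t < s + m then -1 else 0) \<le> Zg \<theta> Dl k n (\<lambda>_. m) h - Zg \<theta> Dl k n (\<lambda>s. min (t - s) m) h \<Longrightarrow> ?thesis" by simp
  qed
  moreover have "real (card {s\<in>{1..t-1}. t < s + m}) \<le> real m - 1" using card_window[of t m] m by linarith
  ultimately show ?thesis by linarith
qed




lemma take_arm: "1 \<le> s \<Longrightarrow> s \<le> n \<Longrightarrow> n \<le> length h \<Longrightarrow> arm (take n h) s = arm h s"
  by (auto simp: arm_def)
lemma take_conv: "1 \<le> s \<Longrightarrow> s \<le> n \<Longrightarrow> n \<le> length h \<Longrightarrow> conv (take n h) s = conv h s"
  by (auto simp: conv_def)
lemma take_dly: "1 \<le> s \<Longrightarrow> s \<le> n \<Longrightarrow> n \<le> length h \<Longrightarrow> dly (take n h) s = dly h s"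
  by (auto simp: dly_def)

lemma take_Nk: "t - 1 \<le> length h \<Longrightarrow> Nk (take (t-1) h) k t = Nk h k t"
  unfolding Nk_def by (intro arg_cong[where f="\<lambda>x. real (card x)"]) (auto simp: take_arm)
lemma take_Sk: "t - 1 \<le> length h \<Longrightarrow> Sk m (take (t-1) h) k t = Sk m h k t"
  unfolding Sk_def by (intro arg_cong[where f="\<lambda>x. real (card x)"]) (auto simp: take_arm take_conv take_dly)
lemma take_Ntil: "1 \<le> m \<Longrightarrow> t - 1 \<le> length h \<Longrightarrow> Ntil Dl m (take (t-1) h) k t = Ntil Dl m h k t"
  unfolding Ntil_sum by (intro sum.cong refl) (auto simp: take_arm)
lemma take_ucb: "1 \<le> m \<Longrightarrow> t - 1 \<le> length h \<Longrightarrow> ucb Dl m beta (take (t-1) h) k t = ucb Dl m beta h k t"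
  unfolding ucb_def theta_hat_def using take_Nk[of t h k] take_Sk[of t h m k] take_Ntil[of m t h Dl k] by simp

lemma pol_range: "is_delayed_ucb K Dl m beta pol \<Longrightarrow> pol h \<in> {1..K}"
  unfolding is_delayed_ucb_def by (metis DiffD1 not_le)

lemma ucb_prop:
  assumes pol: "is_delayed_ucb K Dl m beta pol" and m: "1 \<le> m"
    and h: "h \<in> set_pmf (hist_pmf \<theta> Dl pol T)" and t: "K < t" "t \<le> T" and j: "j \<in> {1..K}"
  shows "ucb Dl m beta h j t \<le> ucb Dl m beta h (arm h t) t"
proof -
  have sup: "length h = T" "arm h t = pol (take (t-1) h)" using hist_support[OF h] t by auto
  have lt: "length (take (t-1) h) = t - 1" "K \<le> length (take (t-1) h)" using sup t by auto
  have "ucb Dl m beta (take (t-1) h) j (length (take (t-1) h) + 1) \<le>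
        ucb Dl m beta (take (t-1) h) (pol (take (t-1) h)) (length (take (t-1) h) + 1)"
    using pol lt(2) j unfolding is_delayed_ucb_def by blast
  moreover have "length (take (t-1) h) + 1 = t" using lt t by simp
  ultimately show ?thesis using take_ucb[OF m, of t h] sup t by simp
qed

lemma first_K_arms:
  assumes pol: "is_delayed_ucb K Dl m beta pol"
    and h: "h \<in> set_pmf (hist_pmf \<theta> Dl pol T)" and T: "K \<le> T" and j: "j \<in> {1..K}"
  shows "\<exists>s\<in>{1..K}. arm h s = j"
proof -
  have sup: "length h = T" "\<And>s. s \<in> {1..T} \<Longrightarrow> arm h s = pol (take (s-1) h)" using hist_support[OF h] by auto
  define xs where "xs = map fst (take K h)"
  have lxs: "length xs = K" using sup T by (simp add: xs_def)
  have nth: "xs ! i = arm h (Suc i)" if "i < K" for i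
    using that sup T by (simp add: xs_def arm_def)
  have notin: "pol (take i h) \<in> {1..K} - set (map fst (take i h))" if "i < K" for i
  proof -
    have "length (take i h) < K" using that by simp
    then show ?thesis using pol unfolding is_delayed_ucb_def by blast
  qed
  have dist: "distinct xs"
  proof (subst distinct_conv_nth, intro allI impI)
    fix i i' assume ii: "i < length xs" "i' < length xs" "i \<noteq> i'"
    have ne: "xs ! a \<noteq> xs ! b" if "a < b" "b < K" for a b
    proof -
      have "xs ! b = pol (take b h)" using nth[of b] sup(2)[of "Suc b"] that T by simp
      moreover have "xs ! a \<in> set (map fst (take b h))"
        using nth[of a] that sup T by (force simp: arm_def in_set_conv_nth)
      moreover have "xs ! b \<notin> set (map fst (take b h))" using notin[of b] that \<open>xs ! b = pol (take b h)\<close> by simp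
      ultimately show ?thesis by metis
    qed
    show "xs ! i \<noteq> xs ! i'" using ne[of i i'] ne[of i' i] ii lxs by (cases "i < i'") auto
  qed
  have sub: "set xs \<subseteq> {1..K}"
  proof
    fix x assume "x \<in> set xs"
    then obtain i where i: "i < K" "xs ! i = x" using lxs by (auto simp: in_set_conv_nth)
    then show "x \<in> {1..K}" using nth[of i] sup(2)[of "Suc i"] notin[of i] T by auto
  qed
  have "card (set xs) = K" using dist lxs distinct_card by blast
  then have "set xs = {1..K}" using sub by (intro card_subset_eq) auto
  then obtain i where "i < K" "xs ! i = j" using j lxs by (metis in_set_conv_nth)
  then show ?thesis using nth[of i] by (intro bexI[of _ "Suc i"]) auto
qed




lemma core_ineq:
  fixes NtA Ntk \<delta> \<tau> thA thk bt bT WA Wk SA Sk nA n a0 :: real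
  assumes pos: "NtA > 0" "Ntk > 0" "\<delta> > 0" "\<tau> > 0" "thA - thk > 2 * \<delta>" "0 \<le> bt" "bt \<le> bT"
    and a0: "0 \<le> a0" and n: "0 \<le> n" "0 \<le> nA"
    and WA: "WA > - (sqrt (nA * bt / 2) + \<delta> * \<tau> * max 0 (nA - a0))"
    and NtA: "NtA \<ge> \<tau> * (nA - a0)"
    and ucb: "(SA + sqrt (nA * bt / 2)) / NtA \<le> (Sk + sqrt (n * bt / 2)) / Ntk"
    and S: "SA = WA + thA * NtA" "Sk = Wk + thk * Ntk"
    and Ntk: "Ntk \<ge> \<tau> * (n - a0)"
    and nL: "n \<ge> bT / (2 * ((thA - thk - 2 * \<delta>) * \<tau>)\<^sup>2) + 2 * a0"
  shows "Wk \<ge> \<delta> * \<tau> * (n - a0)"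
proof -
  define \<gamma> where "\<gamma> = (thA - thk - 2 * \<delta>) * \<tau>"
  have g: "\<gamma> > 0" using pos by (simp add: \<gamma>_def)
  have m1: "\<delta> * \<tau> * max 0 (nA - a0) \<le> \<delta> * NtA"
  proof -
    have "\<tau> * max 0 (nA - a0) \<le> NtA" using NtA pos by (auto simp: max_def)
    then show ?thesis using pos by (simp add: mult.assoc mult_left_mono)
  qed
  have u1: "(SA + sqrt (nA * bt / 2)) / NtA > thA - \<delta>"
  proof -
    have "SA + sqrt (nA * bt / 2) > (thA - \<delta>) * NtA" using WA m1 S by (simp add: algebra_simps)
    then show ?thesis using pos by (simp add: field_simps)
  qed
  have "(Sk + sqrt (n * bt / 2)) / Ntk > thA - \<delta>" using u1 ucb by linarith
  then have uk: "Sk + sqrt (n * bt / 2) > (thA - \<delta>) * Ntk" using pos by (simp add: field_simps)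
  show ?thesis
  proof (rule ccontr)
    assume "\<not> ?thesis"
    then have Wk: "Wk < \<delta> * \<tau> * (n - a0)" by simp
    have "\<delta> * \<tau> * (n - a0) \<le> \<delta> * Ntk" using Ntk pos by (simp add: mult.assoc mult_left_mono)
    then have "sqrt (n * bt / 2) > (thA - thk - 2 * \<delta>) * Ntk" using uk S Wk by (simp add: algebra_simps)
    moreover have "(thA - thk - 2 * \<delta>) * Ntk \<ge> \<gamma> * (n - a0)"
      unfolding \<gamma>_def using Ntk pos by (simp add: mult.assoc mult_left_mono)
    ultimately have r: "sqrt (n * bt / 2) > \<gamma> * (n - a0)" by linarith
    have q0: "bT / (2 * \<gamma>\<^sup>2) \<ge> 0" using pos by simp
    have na: "n - a0 \<ge> 0" using nL a0 q0 unfolding \<gamma>_def by linarith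
    have "(\<gamma> * (n - a0))\<^sup>2 < (sqrt (n * bt / 2))\<^sup>2"
      using r g na by (intro power_strict_mono) auto
    also have "\<dots> = n * bt / 2" using n pos by simp
    finally have A: "\<gamma>\<^sup>2 * (n - a0)\<^sup>2 < n * bt / 2" by (simp add: power_mult_distrib)
    have "\<gamma>\<^sup>2 * (n * (n - 2 * a0)) \<le> \<gamma>\<^sup>2 * (n - a0)\<^sup>2"
      by (intro mult_left_mono) (auto simp: power2_eq_square algebra_simps)
    moreover have "n * (bT / 2) \<le> \<gamma>\<^sup>2 * (n * (n - 2 * a0))"
    proof -
      have "bT / (2 * \<gamma>\<^sup>2) \<le> n - 2 * a0" using nL unfolding \<gamma>_def by linarith
      then have "bT / 2 \<le> \<gamma>\<^sup>2 * (n - 2 * a0)" using g by (simp add: field_simps)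
      then have "n * (bT / 2) \<le> n * (\<gamma>\<^sup>2 * (n - 2 * a0))" using n by (intro mult_left_mono) auto
      then show ?thesis by (simp add: algebra_simps)
    qed
    moreover have "n * (bt / 2) \<le> n * (bT / 2)" using pos n by (intro mult_left_mono) auto
    ultimately show False using A by simp
  qed
qed




lemma Nk_pc: "Nk h k t = real (pc h k t)" by (simp add: Nk_def pc_def)

lemma ucb_form:
  assumes Nt: "Ntil Dl m h j t > 0" and b: "0 \<le> beta t"
  shows "ucb Dl m beta h j t = (Sk m h j t + sqrt (real (pc h j t) * beta t / 2)) / Ntil Dl m h j t"
proof -
  define N where "N = real (pc h j t)"
  define D where "D = Ntil Dl m h j t"
  have "sqrt (N / D) * sqrt (beta t / (2 * D)) = sqrt ((N * beta t / 2) / D\<^sup>2)"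
    by (simp add: real_sqrt_mult[symmetric] power2_eq_square field_simps)
  also have "\<dots> = sqrt (N * beta t / 2) / D" using Nt by (simp add: real_sqrt_divide D_def real_sqrt_mult)
  finally show ?thesis unfolding ucb_def theta_hat_def Nk_pc N_def[symmetric] D_def[symmetric]
    by (simp add: add_divide_distrib)
qed

lemma Ntil_pos:
  assumes m: "1 \<le> m" and tau: "tau Dl m > 0" and s: "1 \<le> s" "s + m \<le> t" "arm h s = j"
  shows "Ntil Dl m h j t > 0"
proof -
  have "s \<in> {s\<in>{1..t-1}. arm h s = j \<and> s + m \<le> t}" using s m by auto
  then have "card {s\<in>{1..t-1}. arm h s = j \<and> s + m \<le> t} \<ge> 1"
    by (metis (no_types, lifting) One_nat_def Suc_leI card_gt_0_iff empty_iff finite_atLeastAtMost finite_subset mem_Collect_eq subsetI)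
  then have "tau Dl m * card {s\<in>{1..t-1}. arm h s = j \<and> s + m \<le> t} > 0" using tau by simp
  then show ?thesis using Ntil_lower[OF m, where Dl=Dl and h=h and k=j and t=t] by linarith
qed

lemma pc_pos: "1 \<le> s \<Longrightarrow> s < t \<Longrightarrow> arm h s = j \<Longrightarrow> pc h j t \<ge> 1"
proof -
  assume a: "1 \<le> s" "s < t" "arm h s = j"
  have "s \<in> {x\<in>{1..t-1}. arm h x = j}" using a by auto
  moreover have "finite {x\<in>{1..t-1}. arm h x = j}" by simp
  ultimately have "card {x\<in>{1..t-1}. arm h x = j} > 0" by (auto simp: card_gt_0_iff)
  then show ?thesis unfolding pc_def by simp
qed

lemma pc_le: "pc h k t \<le> t - 1"
proof -
  have "pc h k t \<le> card {1..t-1}" unfolding pc_def by (intro card_mono) auto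
  then show ?thesis by simp
qed




lemma count_bound:
  fixes beta :: "nat \<Rightarrow> real"
  assumes pol: "is_delayed_ucb K Dl m beta pol" and m: "1 \<le> m" and K: "1 \<le> K"
    and h: "h \<in> set_pmf (hist_pmf \<theta> Dl pol T)"
    and k: "k \<in> {2..K}"
    and th: "\<And>j. j \<in> {1..K} \<Longrightarrow> 0 \<le> \<theta> j \<and> \<theta> j \<le> 1"
    and tau: "tau Dl m > 0" and dl: "\<delta> > 0" "\<theta> 1 - \<theta> k > 2 * \<delta>"
    and b0: "\<And>t. 0 \<le> beta t" and bmono: "\<And>t t'. t \<le> t' \<Longrightarrow> beta t \<le> beta t'"
  defines "a0 \<equiv> real m - 1" and "c \<equiv> \<delta> * tau Dl m"
    and "L \<equiv> beta T / (2 * ((\<theta> 1 - \<theta> k - 2 * \<delta>) * tau Dl m)\<^sup>2) + 2 * (real m - 1)"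
  shows "real (pc h k (Suc T)) \<le> real (K + m) + (L + 1)
     + (\<Sum>n\<in>{0..T}. ind (Zg \<theta> Dl k n (\<lambda>_. m) h \<ge> c * n - (c * a0 + a0)))
     + (\<Sum>t\<in>{1..T}. \<Sum>n\<in>{1..T}. ind (Zg \<theta> Dl 1 n (\<lambda>s. min (t - s) m) h
            \<le> - (sqrt (real n * beta t / 2) + c * max 0 (real n - a0))))"
proof -
  have lenh: "length h = T" using hist_support[OF h] by simp
  define P where "P = {s\<in>{1..T}. arm h s = k}"
  define Q3 where "Q3 = (\<lambda>n. Zg \<theta> Dl k n (\<lambda>_. m) h \<ge> c * n - (c * a0 + a0))"
  define F where "F = (\<lambda>n t. Zg \<theta> Dl 1 n (\<lambda>s. min (t - s) m) h
            \<le> - (sqrt (real n * beta t / 2) + c * max 0 (real n - a0)))"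
  define P2 where "P2 = {s\<in>P. real (pc h k s) < L}"
  define P3 where "P3 = {s\<in>P. Q3 (pc h k s)}"
  define P4 where "P4 = {t\<in>{1..T}. 1 \<le> pc h 1 t \<and> F (pc h 1 t) t}"
  have pcT: "pc h k (Suc T) = card P" unfolding pc_def P_def by simp
  have a00: "0 \<le> a0" using m by (simp add: a0_def)
  have L0: "0 \<le> L"
  proof -
    have "0 \<le> beta T / (2 * ((\<theta> 1 - \<theta> k - 2 * \<delta>) * tau Dl m)\<^sup>2)" using b0[of T] by simp
    then show ?thesis unfolding L_def using m by simp
  qed
  have key: "t \<in> P3" if t: "t \<in> P" "\<not> t \<le> K + m" "\<not> real (pc h k t) < L" "\<not> (1 \<le> pc h 1 t \<and> F (pc h 1 t) t)" for t
  proof -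
    have tT: "1 \<le> t" "t \<le> T" "arm h t = k" using t(1) by (auto simp: P_def)
    have KT: "K \<le> T" using t(2) tT by simp
    obtain s1 where s1: "s1 \<in> {1..K}" "arm h s1 = 1" using first_K_arms[OF pol h KT, of 1] K by auto
    obtain sk where sk: "sk \<in> {1..K}" "arm h sk = k" using first_K_arms[OF pol h KT, of k] k by auto
    define n1 where "n1 = pc h 1 t"
    define n where "n = pc h k t"
    have n1p: "1 \<le> n1" unfolding n1_def by (rule pc_pos[of s1]) (use s1 t(2) in auto)
    have nF: "\<not> F n1 t" using t(4) n1p by (simp add: n1_def)
    have Nt1: "Ntil Dl m h 1 t > 0" by (rule Ntil_pos[OF m tau, of s1]) (use s1 t(2) in auto)
    have Ntk: "Ntil Dl m h k t > 0" by (rule Ntil_pos[OF m tau, of sk]) (use sk t(2) in auto)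
    have len: "t - 1 \<le> length h" using lenh tT by simp
    have W1: "Zg \<theta> Dl 1 n1 (\<lambda>s. min (t - s) m) h = Sk m h 1 t - \<theta> 1 * Ntil Dl m h 1 t"
      by (rule W_eq[OF m len]) (simp add: n1_def)
    have Wk: "Zg \<theta> Dl k n (\<lambda>s. min (t - s) m) h = Sk m h k t - \<theta> k * Ntil Dl m h k t"
      by (rule W_eq[OF m len]) (simp add: n_def)
    have "ucb Dl m beta h 1 t \<le> ucb Dl m beta h (arm h t) t"
      by (rule ucb_prop[OF pol m h]) (use t(2) tT K in auto)
    then have u: "(Sk m h 1 t + sqrt (real n1 * beta t / 2)) / Ntil Dl m h 1 t \<le>
        (Sk m h k t + sqrt (real n * beta t / 2)) / Ntil Dl m h k t"
      using ucb_form[where beta=beta, OF Nt1 b0[of t]] ucb_form[where beta=beta, OF Ntk b0[of t]] tT by (simp add: n1_def n_def)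
    have thk: "0 \<le> \<theta> k" "\<theta> k \<le> 1" using th[of k] k by auto
    have core: "Zg \<theta> Dl k n (\<lambda>s. min (t - s) m) h \<ge> \<delta> * tau Dl m * (real n - a0)"
    proof (rule core_ineq[where NtA="Ntil Dl m h 1 t" and Ntk="Ntil Dl m h k t" and thA="\<theta> 1" and thk="\<theta> k"
        and bt="beta t" and bT="beta T" and WA="Zg \<theta> Dl 1 n1 (\<lambda>s. min (t - s) m) h"
        and SA="Sk m h 1 t" and Sk="Sk m h k t" and nA="real n1"])
      show "Ntil Dl m h 1 t > 0" "Ntil Dl m h k t > 0" "\<delta> > 0" "tau Dl m > 0" "\<theta> 1 - \<theta> k > 2 * \<delta>"
        "0 \<le> beta t" "beta t \<le> beta T" "0 \<le> a0" "0 \<le> real n" "0 \<le> real n1"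
        using Nt1 Ntk dl tau b0[of t] bmono[of t T] tT a00 by auto
      show "Zg \<theta> Dl 1 n1 (\<lambda>s. min (t - s) m) h > - (sqrt (real n1 * beta t / 2) + \<delta> * tau Dl m * max 0 (real n1 - a0))"
        using nF by (simp add: F_def c_def)
      show "Ntil Dl m h 1 t \<ge> tau Dl m * (real n1 - a0)"
        using Ntil_lower2[OF m, where Dl=Dl and h=h and k=1 and t=t] by (simp add: n1_def a0_def)
      show "Ntil Dl m h k t \<ge> tau Dl m * (real n - a0)"
        using Ntil_lower2[OF m, where Dl=Dl and h=h and k=k and t=t] by (simp add: n_def a0_def)
      show "(Sk m h 1 t + sqrt (real n1 * beta t / 2)) / Ntil Dl m h 1 t \<le>
        (Sk m h k t + sqrt (real n * beta t / 2)) / Ntil Dl m h k t" by (rule u)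
      show "Sk m h 1 t = Zg \<theta> Dl 1 n1 (\<lambda>s. min (t - s) m) h + \<theta> 1 * Ntil Dl m h 1 t" using W1 by simp
      show "Sk m h k t = Zg \<theta> Dl k n (\<lambda>s. min (t - s) m) h + \<theta> k * Ntil Dl m h k t" using Wk by simp
      show "real n \<ge> beta T / (2 * ((\<theta> 1 - \<theta> k - 2 * \<delta>) * tau Dl m)\<^sup>2) + 2 * a0"
        using t(3) by (simp add: n_def L_def a0_def)
    qed
    have "Zg \<theta> Dl k n (\<lambda>_. m) h \<ge> Zg \<theta> Dl k n (\<lambda>s. min (t - s) m) h - (real m - 1)"
      by (rule Zm_vs_W[where \<theta>=\<theta> and k=k, OF m len _ thk]) (simp add: n_def)
    then have "Q3 n" using core unfolding Q3_def c_def a0_def by (simp add: algebra_simps)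
    then show ?thesis using t(1) by (simp add: P3_def n_def)
  qed
  have sub: "P \<subseteq> {1..K+m} \<union> P2 \<union> P3 \<union> P4"
  proof
    fix t assume tP: "t \<in> P"
    show "t \<in> {1..K+m} \<union> P2 \<union> P3 \<union> P4"
    proof (cases "t \<le> K + m \<or> real (pc h k t) < L \<or> (1 \<le> pc h 1 t \<and> F (pc h 1 t) t)")
      case True
      then show ?thesis using tP by (auto simp: P_def P2_def P4_def)
    next
      case False
      then show ?thesis using key[OF tP] by auto
    qed
  qed
  have "card P \<le> card ({1..K+m} \<union> P2 \<union> P3 \<union> P4)" by (intro card_mono[OF _ sub]) (auto simp: P2_def P3_def P4_def P_def)
  also have "\<dots> \<le> card {1..K+m} + card P2 + card P3 + card P4"
    by (meson card_Un_le add_le_mono le_refl order_trans)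
  finally have cP: "real (card P) \<le> real (K + m) + real (card P2) + real (card P3) + real (card P4)" by simp
  have injP: "inj_on (pc h k) A" if "A \<subseteq> P" for A
    by (rule inj_on_subset[OF pc_inj]) (use that in \<open>auto simp: P_def\<close>)
  have c2: "real (card P2) \<le> L + 1"
  proof -
    have "card P2 \<le> card {..<nat \<lceil>L\<rceil>}"
    proof (rule card_inj_on_le[OF injP])
      show "P2 \<subseteq> P" by (auto simp: P2_def)
      show "pc h k ` P2 \<subseteq> {..<nat \<lceil>L\<rceil>}"
      proof
        fix x assume "x \<in> pc h k ` P2"
        then have "real x < L" by (auto simp: P2_def)
        moreover have "L \<le> real_of_int \<lceil>L\<rceil>" by (rule le_of_int_ceiling)
        ultimately have "real_of_int (int x) < real_of_int \<lceil>L\<rceil>" by linarith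
        then have "int x < \<lceil>L\<rceil>" by (simp only: of_int_less_iff)
        then show "x \<in> {..<nat \<lceil>L\<rceil>}" by simp
      qed
    qed simp
    then have "real (card P2) \<le> real (nat \<lceil>L\<rceil>)" by simp
    also have "\<dots> \<le> L + 1" using L0 by (simp add: of_nat_nat)
    finally show ?thesis .
  qed
  have c3: "real (card P3) \<le> (\<Sum>n\<in>{0..T}. ind (Q3 n))"
  proof -
    have "card P3 \<le> card {n\<in>{0..T}. Q3 n}"
    proof (rule card_inj_on_le[OF injP])
      show "P3 \<subseteq> P" by (auto simp: P3_def)
      show "pc h k ` P3 \<subseteq> {n\<in>{0..T}. Q3 n}"
        using pc_le by (fastforce simp: P3_def P_def intro: le_trans)
    qed simp
    also have "card {n\<in>{0..T}. Q3 n} = (\<Sum>n\<in>{0..T}. ind (Q3 n))"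
    proof -
      have e: "{n\<in>{0..T}. Q3 n} = {0..T} \<inter> {n. Q3 n}" by auto
      show ?thesis unfolding e by (simp add: ind_def sum.If_cases Int_def)
    qed
    finally show ?thesis by simp
  qed
  have c4: "real (card P4) \<le> (\<Sum>t\<in>{1..T}. \<Sum>n\<in>{1..T}. ind (F n t))"
  proof -
    have e: "P4 = {1..T} \<inter> {t. 1 \<le> pc h 1 t \<and> F (pc h 1 t) t}" by (auto simp: P4_def)
    have "real (card P4) = (\<Sum>t\<in>{1..T}. ind (1 \<le> pc h 1 t \<and> F (pc h 1 t) t))"
      unfolding e by (simp add: ind_def sum.If_cases Int_def)
    also have "\<dots> \<le> (\<Sum>t\<in>{1..T}. \<Sum>n\<in>{1..T}. ind (F n t))"
    proof (intro sum_mono)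
      fix t assume t: "t \<in> {1..T}"
      show "ind (1 \<le> pc h 1 t \<and> F (pc h 1 t) t) \<le> (\<Sum>n\<in>{1..T}. ind (F n t))"
      proof (cases "1 \<le> pc h 1 t \<and> F (pc h 1 t) t")
        case True
        have "pc h 1 t \<in> {1..T}" using True pc_le[of h 1 t] t by auto
        then have "ind (F (pc h 1 t) t) \<le> (\<Sum>n\<in>{1..T}. ind (F n t))"
          by (intro member_le_sum) auto
        then show ?thesis using True by simp
      next
        case False
        then have "ind (1 \<le> pc h 1 t \<and> F (pc h 1 t) t) = 0" by (simp only: ind_def if_False)
        then show ?thesis by (simp add: sum_nonneg)
      qed
    qed
    finally show ?thesis .
  qed
  show ?thesis using cP c2 c3 c4 unfolding pcT Q3_def F_def by linarith
qed




lemma geom_bound: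
  fixes r :: real
  assumes r: "0 < r" "r < 1" and A: "A \<subseteq> {..<N}"
  shows "(\<Sum>n\<in>A. r ^ n) \<le> 1 / (1 - r)"
proof -
  have "(\<Sum>n\<in>A. r ^ n) \<le> (\<Sum>n<N. r ^ n)"
    by (rule sum_mono2) (use A r in auto)
  also have "\<dots> = (1 - r ^ N) / (1 - r)" using r by (simp add: sum_gp_strict)
  also have "\<dots> \<le> 1 / (1 - r)" using r by (intro divide_right_mono) auto
  finally show ?thesis .
qed

lemma prob_a:
  assumes th: "0 \<le> \<theta> k" "\<theta> k \<le> 1" and c: "0 \<le> c" and b: "0 \<le> b0"
  shows "measure_pmf.expectation (hist_pmf \<theta> Dl pol j) (\<lambda>h. ind (Zg \<theta> Dl k n d h \<ge> c * n - b0))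
     \<le> exp (4 * c * b0) * exp (- 2 * c\<^sup>2) ^ n"
proof -
  have e: "exp (4 * c * b0) * exp (- 2 * c\<^sup>2) ^ n = exp (- 2 * c\<^sup>2 * n + 4 * c * b0)"
    by (simp add: exp_of_nat_mult[symmetric] exp_add[symmetric] algebra_simps)
  show ?thesis
  proof (cases "c * n - b0 \<le> 0")
    case True
    have "measure_pmf.expectation (hist_pmf \<theta> Dl pol j) (\<lambda>h. ind (Zg \<theta> Dl k n d h \<ge> c * n - b0)) \<le> 1"
      by (rule expectation_pmf_le_const[where B=1]) (auto simp: ind_def)
    moreover have "0 \<le> - 2 * c\<^sup>2 * n + 4 * c * b0"
    proof -
      have h1: "c * (c * n) \<le> c * b0" using True c by (intro mult_left_mono) auto
      have h2: "0 \<le> c * b0" using c b by simp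
      have e1: "- 2 * c\<^sup>2 * n + 4 * c * b0 = - 2 * (c * (c * n)) + 4 * (c * b0)" by (simp add: power2_eq_square)
      show ?thesis unfolding e1 using h1 h2 by linarith
    qed
    ultimately show ?thesis unfolding e by (meson one_le_exp_iff order_trans)
  next
    case False
    define a where "a = c * n - b0"
    have a0: "0 < a" using False by (simp add: a_def)
    have "c * real n > 0" using a0 b by (simp add: a_def)
    then have "real n \<noteq> 0" by (metis mult_zero_right less_irrefl)
    then have n0: "0 < real n" by simp
    have "measure_pmf.expectation (hist_pmf \<theta> Dl pol j) (\<lambda>h. ind (Zg \<theta> Dl k n d h \<ge> c * n - b0)) \<le> exp (- 2 * a\<^sup>2 / n)"
      unfolding a_def[symmetric] by (rule chernoff_upper[where \<theta>=\<theta> and k=k, OF th]) (use a0 in simp)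
    also have "\<dots> \<le> exp (- 2 * c\<^sup>2 * n + 4 * c * b0)"
    proof -
      have "2 * a\<^sup>2 / n = 2 * c\<^sup>2 * n - 4 * c * b0 + 2 * b0\<^sup>2 / n"
        using n0 by (simp add: a_def power2_eq_square field_simps)
      moreover have "0 \<le> 2 * b0\<^sup>2 / n" using n0 by simp
      ultimately show ?thesis by simp
    qed
    finally show ?thesis unfolding e .
  qed
qed

lemma prob_b:
  assumes th: "0 \<le> \<theta> 1" "\<theta> 1 \<le> 1" and c: "0 \<le> c" and a0: "0 \<le> a0" and n: "1 \<le> n" and bt: "0 \<le> bt"
  shows "measure_pmf.expectation (hist_pmf \<theta> Dl pol j)
     (\<lambda>h. ind (Zg \<theta> Dl 1 n d h \<le> - (sqrt (real n * bt / 2) + c * max 0 (real n - a0))))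
     \<le> exp (- bt) * (exp (4 * c\<^sup>2 * a0) * exp (- 2 * c\<^sup>2) ^ n)"
proof -
  define M where "M = max 0 (real n - a0)"
  define a where "a = sqrt (real n * bt / 2) + c * M"
  have M0: "0 \<le> M" by (simp add: M_def)
  have a0': "0 \<le> a" using c M0 bt by (simp add: a_def)
  have n0: "0 < real n" using n by simp
  have "measure_pmf.expectation (hist_pmf \<theta> Dl pol j)
     (\<lambda>h. ind (Zg \<theta> Dl 1 n d h \<le> - (sqrt (real n * bt / 2) + c * max 0 (real n - a0)))) \<le> exp (- 2 * a\<^sup>2 / n)"
    unfolding M_def[symmetric] a_def[symmetric] by (rule chernoff_lower[where \<theta>=\<theta> and k=1, OF th a0'])
  also have "\<dots> \<le> exp (- bt + (- 2 * c\<^sup>2 * n + 4 * c\<^sup>2 * a0))"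
  proof -
    have sq: "(sqrt (real n * bt / 2))\<^sup>2 = real n * bt / 2" using bt by simp
    have "a\<^sup>2 \<ge> real n * bt / 2 + c\<^sup>2 * M\<^sup>2"
    proof -
      have "a\<^sup>2 = (sqrt (real n * bt / 2))\<^sup>2 + 2 * sqrt (real n * bt / 2) * (c * M) + (c * M)\<^sup>2"
        by (simp add: a_def power2_sum)
      moreover have "0 \<le> 2 * sqrt (real n * bt / 2) * (c * M)"
        by (intro mult_nonneg_nonneg) (use c M0 bt in auto)
      ultimately show ?thesis using sq by (simp add: power_mult_distrib)
    qed
    then have "2 * a\<^sup>2 / n \<ge> 2 * (real n * bt / 2 + c\<^sup>2 * M\<^sup>2) / n"
      using n0 by (intro divide_right_mono) auto
    moreover have "2 * (real n * bt / 2 + c\<^sup>2 * M\<^sup>2) / n = bt + 2 * c\<^sup>2 * (M\<^sup>2 / n)"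
      using n0 by (simp add: field_simps)
    moreover have "M\<^sup>2 / n \<ge> n - 2 * a0"
    proof (cases "real n \<le> a0")
      case True
      then show ?thesis using a0 n0 by (simp add: M_def)
    next
      case False
      then have M: "M = n - a0" by (simp add: M_def)
      have "(n - a0)\<^sup>2 \<ge> n * (n - 2 * a0)" by (simp add: power2_eq_square algebra_simps)
      then have "M\<^sup>2 \<ge> (n - 2 * a0) * n" using M by (simp add: mult.commute)
      then show ?thesis by (subst pos_le_divide_eq[OF n0])
    qed
    then have "2 * c\<^sup>2 * (M\<^sup>2 / n) \<ge> 2 * c\<^sup>2 * (n - 2 * a0)" by (intro mult_left_mono) auto
    ultimately have "2 * a\<^sup>2 / n \<ge> bt + 2 * c\<^sup>2 * (n - 2 * a0)" by linarith
    then show ?thesis by (simp add: algebra_simps)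
  qed
  also have "\<dots> = exp (- bt) * (exp (4 * c\<^sup>2 * a0) * exp (- 2 * c\<^sup>2) ^ n)"
    by (simp add: exp_of_nat_mult[symmetric] exp_add[symmetric] algebra_simps)
  finally show ?thesis .
qed




lemma integrable_ind: "integrable (measure_pmf M) (\<lambda>h. ind (P h))"
  by (rule integrable_pmf_bounded[where B=1]) (auto simp: ind_def)

lemma exp_count:
  fixes beta :: "nat \<Rightarrow> real"
  assumes pol: "is_delayed_ucb K Dl m beta pol" and m: "1 \<le> m" and K: "1 \<le> K"
    and k: "k \<in> {2..K}"
    and th: "\<And>j. j \<in> {1..K} \<Longrightarrow> 0 \<le> \<theta> j \<and> \<theta> j \<le> 1"
    and tau: "tau Dl m > 0" and dl: "\<delta> > 0" "\<theta> 1 - \<theta> k > 2 * \<delta>"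
    and b0: "\<And>t. 0 \<le> beta t" and bmono: "\<And>t t'. t \<le> t' \<Longrightarrow> beta t \<le> beta t'"
    and Sb: "\<And>T. (\<Sum>t\<in>{1..T}. exp (- beta t)) \<le> Sb"
  shows "measure_pmf.expectation (hist_pmf \<theta> Dl pol T) (\<lambda>h. real (pc h k (Suc T))) \<le>
     real (K + m) + (beta T / (2 * ((\<theta> 1 - \<theta> k - 2 * \<delta>) * tau Dl m)\<^sup>2) + 2 * (real m - 1) + 1)
     + exp (4 * (\<delta> * tau Dl m) * ((\<delta> * tau Dl m) * (real m - 1) + (real m - 1))) / (1 - exp (- 2 * (\<delta> * tau Dl m)\<^sup>2))
     + exp (4 * (\<delta> * tau Dl m)\<^sup>2 * (real m - 1)) / (1 - exp (- 2 * (\<delta> * tau Dl m)\<^sup>2)) * Sb"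
proof -
  define a0 where "a0 = real m - 1"
  define c where "c = \<delta> * tau Dl m"
  define L where "L = beta T / (2 * ((\<theta> 1 - \<theta> k - 2 * \<delta>) * tau Dl m)\<^sup>2) + 2 * (real m - 1)"
  define r where "r = exp (- 2 * c\<^sup>2)"
  define b where "b = c * a0 + a0"
  define C0 where "C0 = real (K + m) + (L + 1)"
  define Q where "Q = (\<lambda>n h. ind (Zg \<theta> Dl k n (\<lambda>_. m) h \<ge> c * n - (c * a0 + a0)))"
  define F where "F = (\<lambda>t n h. ind (Zg \<theta> Dl 1 n (\<lambda>s. min (t - s) m) h
            \<le> - (sqrt (real n * beta t / 2) + c * max 0 (real n - a0))))"
  have c0: "0 < c" using dl tau by (simp add: c_def)
  have r: "0 < r" "r < 1" using c0 by (auto simp: r_def)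
  have a00: "0 \<le> a0" using m by (simp add: a0_def)
  have L0: "0 \<le> L"
  proof -
    have "0 \<le> beta T / (2 * ((\<theta> 1 - \<theta> k - 2 * \<delta>) * tau Dl m)\<^sup>2)" using b0[of T] by simp
    then show ?thesis unfolding L_def using m by simp
  qed
  have thk: "0 \<le> \<theta> k" "\<theta> k \<le> 1" using th[of k] k by auto
  have th1: "0 \<le> \<theta> 1" "\<theta> 1 \<le> 1" using th[of 1] K by auto
  have Qb: "\<bar>Q n h\<bar> \<le> 1" "0 \<le> Q n h" for n h by (auto simp: Q_def ind_def)
  have Fb: "\<bar>F t n h\<bar> \<le> 1" "0 \<le> F t n h" for t n h by (auto simp: F_def ind_def)
  define R where "R = (\<lambda>h. C0 + (\<Sum>n\<in>{0..T}. Q n h) + (\<Sum>t\<in>{1..T}. \<Sum>n\<in>{1..T}. F t n h))"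
  have Rb: "\<bar>R h\<bar> \<le> C0 + real (Suc T) + real T * real T" for h
  proof -
    have "(\<Sum>n\<in>{0..T}. Q n h) \<le> (\<Sum>n\<in>{0..T}. 1)" using Qb by (intro sum_mono) auto
    moreover have "(\<Sum>t\<in>{1..T}. \<Sum>n\<in>{1..T}. F t n h) \<le> (\<Sum>t\<in>{1..T}. \<Sum>n\<in>{1..T}. 1)"
      using Fb by (intro sum_mono) auto
    moreover have "0 \<le> (\<Sum>n\<in>{0..T}. Q n h)" "0 \<le> (\<Sum>t\<in>{1..T}. \<Sum>n\<in>{1..T}. F t n h)"
      using Qb Fb by (auto intro!: sum_nonneg)
    moreover have "0 \<le> C0" using L0 by (simp add: C0_def)
    ultimately show ?thesis unfolding R_def by simp
  qed
  have "measure_pmf.expectation (hist_pmf \<theta> Dl pol T) (\<lambda>h. real (pc h k (Suc T))) \<le>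
        measure_pmf.expectation (hist_pmf \<theta> Dl pol T) R"
  proof (rule expectation_pmf_le[where B="real T" and B'="C0 + real (Suc T) + real T * real T"])
    fix h assume h: "h \<in> set_pmf (hist_pmf \<theta> Dl pol T)"
    show "\<bar>real (pc h k (Suc T))\<bar> \<le> real T" using pc_le[of h k "Suc T"] by simp
    show "real (pc h k (Suc T)) \<le> R h"
      unfolding R_def C0_def Q_def F_def L_def a0_def c_def
      by (rule count_bound[OF pol m K h k th tau dl b0 bmono])
    show "\<bar>R h\<bar> \<le> C0 + real (Suc T) + real T * real T" by (rule Rb)
  qed
  also have "measure_pmf.expectation (hist_pmf \<theta> Dl pol T) R = C0 +
     (\<Sum>n\<in>{0..T}. measure_pmf.expectation (hist_pmf \<theta> Dl pol T) (Q n)) +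
     (\<Sum>t\<in>{1..T}. \<Sum>n\<in>{1..T}. measure_pmf.expectation (hist_pmf \<theta> Dl pol T) (F t n))"
  proof -
    have iQ: "integrable (measure_pmf (hist_pmf \<theta> Dl pol T)) (Q n)" for n
      unfolding Q_def by (rule integrable_ind)
    have iF: "integrable (measure_pmf (hist_pmf \<theta> Dl pol T)) (F t n)" for t n
      unfolding F_def by (rule integrable_ind)
    have iSQ: "integrable (measure_pmf (hist_pmf \<theta> Dl pol T)) (\<lambda>h. \<Sum>n\<in>{0..T}. Q n h)"
      using iQ by auto
    have iSF: "integrable (measure_pmf (hist_pmf \<theta> Dl pol T)) (\<lambda>h. \<Sum>t\<in>{1..T}. \<Sum>n\<in>{1..T}. F t n h)"
      using iF by auto
    have iSF': "integrable (measure_pmf (hist_pmf \<theta> Dl pol T)) (\<lambda>h. \<Sum>n\<in>{1..T}. F t n h)" for t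
      using iF by auto
    show ?thesis unfolding R_def
      using iQ iF iSQ iSF iSF' by (simp add: Bochner_Integration.integral_add integral_sum)
  qed
  also have "(\<Sum>n\<in>{0..T}. measure_pmf.expectation (hist_pmf \<theta> Dl pol T) (Q n)) \<le> exp (4 * c * b) / (1 - r)"
  proof -
    have "(\<Sum>n\<in>{0..T}. measure_pmf.expectation (hist_pmf \<theta> Dl pol T) (Q n)) \<le> (\<Sum>n\<in>{0..T}. exp (4 * c * b) * r ^ n)"
      unfolding Q_def r_def b_def
      by (intro sum_mono prob_a thk) (use c0 a00 in auto)
    also have "\<dots> = exp (4 * c * b) * (\<Sum>n\<in>{0..T}. r ^ n)" by (simp add: sum_distrib_left)
    also have "\<dots> \<le> exp (4 * c * b) * (1 / (1 - r))"
      by (intro mult_left_mono geom_bound[OF r, of _ "Suc T"]) auto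
    finally show ?thesis by simp
  qed
  also have "(\<Sum>t\<in>{1..T}. \<Sum>n\<in>{1..T}. measure_pmf.expectation (hist_pmf \<theta> Dl pol T) (F t n)) \<le>
      exp (4 * c\<^sup>2 * a0) / (1 - r) * Sb"
  proof -
    have "(\<Sum>t\<in>{1..T}. \<Sum>n\<in>{1..T}. measure_pmf.expectation (hist_pmf \<theta> Dl pol T) (F t n)) \<le>
      (\<Sum>t\<in>{1..T}. \<Sum>n\<in>{1..T}. exp (- beta t) * (exp (4 * c\<^sup>2 * a0) * r ^ n))"
      unfolding F_def r_def
      by (intro sum_mono prob_b th1) (use c0 a00 b0 in auto)
    also have "\<dots> = (\<Sum>t\<in>{1..T}. exp (- beta t) * exp (4 * c\<^sup>2 * a0) * (\<Sum>n\<in>{1..T}. r ^ n))"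
      by (simp add: sum_distrib_left mult.assoc)
    also have "\<dots> \<le> (\<Sum>t\<in>{1..T}. exp (- beta t) * exp (4 * c\<^sup>2 * a0) * (1 / (1 - r)))"
      by (intro sum_mono mult_left_mono geom_bound[OF r, of _ "Suc T"]) auto
    also have "\<dots> = (\<Sum>t\<in>{1..T}. exp (- beta t)) * (exp (4 * c\<^sup>2 * a0) / (1 - r))"
      by (simp add: sum_distrib_right sum_divide_distrib)
    also have "\<dots> \<le> Sb * (exp (4 * c\<^sup>2 * a0) / (1 - r))"
      using r by (intro mult_right_mono Sb) auto
    finally show ?thesis by (simp add: mult.commute)
  qed
  finally show ?thesis unfolding C0_def L_def r_def b_def a0_def c_def by simp
qed




lemma cum_reward_sum:
  "cum_reward m h T = (\<Sum>s\<in>{1..T}. ind (conv h s \<and> dly h s \<le> min (T - s) m))"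
proof (induction T)
  case 0
  then show ?case by (simp add: cum_reward_def)
next
  case (Suc T)
  have "cum_reward m h (Suc T) = cum_reward m h T + reward m h (Suc T)"
    unfolding cum_reward_def by (rule sum_snoc)
  also have "reward m h (Suc T) = (\<Sum>s\<in>{1..Suc T}. ind (conv h s \<and> dly h s = Suc T - s \<and> Suc T - s \<le> m))"
  proof -
    have e: "{max 1 (Suc T - m)..Suc T} = {1..Suc T} \<inter> {s. Suc T - s \<le> m}" by auto
    have "reward m h (Suc T) = (\<Sum>s\<in>{1..Suc T} \<inter> {s. Suc T - s \<le> m}. ind (conv h s \<and> dly h s = Suc T - s))"
      unfolding reward_def e by (simp add: ind_def)
    also have "\<dots> = (\<Sum>s\<in>{1..Suc T}. if s \<in> {s. Suc T - s \<le> m} then ind (conv h s \<and> dly h s = Suc T - s) else 0)"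
      by (rule sum.inter_restrict) simp
    also have "\<dots> = (\<Sum>s\<in>{1..Suc T}. ind (conv h s \<and> dly h s = Suc T - s \<and> Suc T - s \<le> m))"
      by (intro sum.cong refl) (auto simp: ind_def)
    finally show ?thesis .
  qed
  also have "cum_reward m h T + (\<Sum>s\<in>{1..Suc T}. ind (conv h s \<and> dly h s = Suc T - s \<and> Suc T - s \<le> m)) =
      (\<Sum>s\<in>{1..Suc T}. ind (conv h s \<and> dly h s \<le> min (Suc T - s) m))"
  proof -
    have "(\<Sum>s\<in>{1..Suc T}. ind (conv h s \<and> dly h s \<le> min (Suc T - s) m)) =
      (\<Sum>s\<in>{1..T}. ind (conv h s \<and> dly h s \<le> min (Suc T - s) m)) + ind (conv h (Suc T) \<and> dly h (Suc T) \<le> 0)"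
      by (simp add: sum_snoc) (auto simp: ind_def)
    also have "(\<Sum>s\<in>{1..T}. ind (conv h s \<and> dly h s \<le> min (Suc T - s) m)) =
       (\<Sum>s\<in>{1..T}. ind (conv h s \<and> dly h s \<le> min (T - s) m) + ind (conv h s \<and> dly h s = Suc T - s \<and> Suc T - s \<le> m))"
    proof (intro sum.cong refl)
      fix s assume s: "s \<in> {1..T}"
      then have e: "Suc T - s = Suc (T - s)" by auto
      show "ind (conv h s \<and> dly h s \<le> min (Suc T - s) m) =
        ind (conv h s \<and> dly h s \<le> min (T - s) m) + ind (conv h s \<and> dly h s = Suc T - s \<and> Suc T - s \<le> m)"
        unfolding e by (auto simp: ind_def min_def)
    qed
    also have "\<dots> = (\<Sum>s\<in>{1..T}. ind (conv h s \<and> dly h s \<le> min (T - s) m)) +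
        (\<Sum>s\<in>{1..T}. ind (conv h s \<and> dly h s = Suc T - s \<and> Suc T - s \<le> m))"
      by (rule sum.distrib)
    finally show ?thesis using Suc.IH by (simp add: sum_snoc)
  qed
  finally show ?case .
qed

lemma exp_cum:
  assumes th: "\<And>h. 0 \<le> \<theta> (pol h) \<and> \<theta> (pol h) \<le> 1"
  shows "measure_pmf.expectation (hist_pmf \<theta> Dl pol T) (\<lambda>h. cum_reward m h T) =
    measure_pmf.expectation (hist_pmf \<theta> Dl pol T) (\<lambda>h. \<Sum>s\<in>{1..T}. \<theta> (arm h s) * tau Dl (min (T - s) m))"
proof -
  define d where "d = (\<lambda>s. min (T - s) m)"
  define G where "G = (\<lambda>h. \<Sum>s\<in>{1..T}. \<theta> (arm h s) * tau Dl (d s))"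
  have thh: "0 \<le> \<theta> (arm h s) \<and> \<theta> (arm h s) \<le> 1" if "h \<in> set_pmf (hist_pmf \<theta> Dl pol T)" "s \<in> {1..T}" for h s
    using hist_support[OF that(1)] that(2) th by auto
  have eq: "cum_reward m h T = Mg \<theta> Dl d h + G h" if h: "h \<in> set_pmf (hist_pmf \<theta> Dl pol T)" for h
    using hist_support[OF h] unfolding cum_reward_sum Mg_def G_def d_def
    by (simp add: sum_subtractf[symmetric] sum.distrib[symmetric])
  have Gb: "\<bar>G h\<bar> \<le> real T" if h: "h \<in> set_pmf (hist_pmf \<theta> Dl pol T)" for h
  proof -
    have "\<bar>G h\<bar> \<le> (\<Sum>s\<in>{1..T}. \<bar>\<theta> (arm h s) * tau Dl (d s)\<bar>)" unfolding G_def by (rule sum_abs)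
    also have "\<dots> \<le> (\<Sum>s\<in>{1..T}. 1)"
      using thh[OF h] tau_nonneg[of Dl] tau_le1[of Dl]
      by (intro sum_mono) (auto simp: abs_mult intro: mult_le_one)
    finally show ?thesis by simp
  qed
  have Mb: "\<bar>Mg \<theta> Dl d h\<bar> \<le> real T" if h: "h \<in> set_pmf (hist_pmf \<theta> Dl pol T)" for h
  proof -
    have "\<bar>Mg \<theta> Dl d h\<bar> \<le> (\<Sum>s\<in>{1..length h}. \<bar>ind (conv h s \<and> dly h s \<le> d s) - \<theta> (arm h s) * tau Dl (d s)\<bar>)"
      unfolding Mg_def by (rule sum_abs)
    also have "\<dots> \<le> (\<Sum>s\<in>{1..length h}. 1)"
    proof (intro sum_mono)
      fix s assume s: "s \<in> {1..length h}"
      have "0 \<le> \<theta> (arm h s) * tau Dl (d s)" "\<theta> (arm h s) * tau Dl (d s) \<le> 1"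
        using thh[OF h, of s] s hist_support[OF h] tau_nonneg[of Dl "d s"] tau_le1[of Dl "d s"] by (auto intro: mult_le_one)
      then show "\<bar>ind (conv h s \<and> dly h s \<le> d s) - \<theta> (arm h s) * tau Dl (d s)\<bar> \<le> 1" by (auto simp: ind_def)
    qed
    finally show ?thesis using hist_support[OF h] by simp
  qed
  have "measure_pmf.expectation (hist_pmf \<theta> Dl pol T) (\<lambda>h. cum_reward m h T) =
        measure_pmf.expectation (hist_pmf \<theta> Dl pol T) (\<lambda>h. Mg \<theta> Dl d h + G h)"
    by (intro integral_cong_AE) (auto simp: AE_measure_pmf_iff eq)
  also have "\<dots> = measure_pmf.expectation (hist_pmf \<theta> Dl pol T) (Mg \<theta> Dl d) + measure_pmf.expectation (hist_pmf \<theta> Dl pol T) G"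
    by (rule Bochner_Integration.integral_add) (auto intro: integrable_pmf_bounded Mb Gb)
  also have "measure_pmf.expectation (hist_pmf \<theta> Dl pol T) (Mg \<theta> Dl d) = 0" by (rule mart[where \<theta>=\<theta> and pol=pol, OF th])
  finally show ?thesis by (simp add: G_def d_def)
qed




lemma regret_le:
  assumes pol: "is_delayed_ucb K Dl m beta pol" and K: "1 \<le> K"
    and th: "\<And>j. j \<in> {1..K} \<Longrightarrow> 0 \<le> \<theta> j \<and> \<theta> j \<le> 1"
    and gap: "\<And>k. k \<in> {2..K} \<Longrightarrow> \<theta> 1 - \<theta> k > 0"
  shows "regret \<theta> Dl m pol T \<le> tau Dl m * (\<Sum>k\<in>{2..K}. (\<theta> 1 - \<theta> k) *
      measure_pmf.expectation (hist_pmf \<theta> Dl pol T) (\<lambda>h. real (pc h k (Suc T))))"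
proof -
  define d where "d = (\<lambda>s. min (T - s) m)"
  define C where "C = (\<Sum>s\<in>{1..T}. \<theta> 1 * tau Dl (d s))"
  define G where "G = (\<lambda>h. \<Sum>s\<in>{1..T}. \<theta> (arm h s) * tau Dl (d s))"
  define H where "H = (\<lambda>h. \<Sum>k\<in>{2..K}. (\<theta> 1 - \<theta> k) * tau Dl m * real (pc h k (Suc T)))"
  have prange: "pol h \<in> {1..K}" for h by (rule pol_range[OF pol])
  have th1: "0 \<le> \<theta> 1" "\<theta> 1 \<le> 1" using th[of 1] K by auto
  have arm_range: "arm h s \<in> {1..K}" if h: "h \<in> set_pmf (hist_pmf \<theta> Dl pol T)" and s: "s \<in> {1..T}" for h s
    using hist_support[OF h] s prange by auto
  have orc: "measure_pmf.expectation (hist_pmf \<theta> Dl (\<lambda>_. 1) T) (\<lambda>h. cum_reward m h T) = C"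
  proof -
    have "measure_pmf.expectation (hist_pmf \<theta> Dl (\<lambda>_. 1) T) (\<lambda>h. cum_reward m h T) =
        measure_pmf.expectation (hist_pmf \<theta> Dl (\<lambda>_. 1) T) (\<lambda>h. \<Sum>s\<in>{1..T}. \<theta> (arm h s) * tau Dl (min (T - s) m))"
      by (rule exp_cum) (use th1 in auto)
    also have "\<dots> = measure_pmf.expectation (hist_pmf \<theta> Dl (\<lambda>_. 1) T) (\<lambda>h. C)"
    proof (intro integral_cong_AE)
      show "AE h in measure_pmf (hist_pmf \<theta> Dl (\<lambda>_. 1) T). (\<Sum>s\<in>{1..T}. \<theta> (arm h s) * tau Dl (min (T - s) m)) = C"
        unfolding AE_measure_pmf_iff
      proof
        fix h assume h: "h \<in> set_pmf (hist_pmf \<theta> Dl (\<lambda>_. 1) T)"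
        show "(\<Sum>s\<in>{1..T}. \<theta> (arm h s) * tau Dl (min (T - s) m)) = C"
          unfolding C_def d_def by (intro sum.cong refl) (use hist_support[OF h] in auto)
      qed
    qed auto
    finally show ?thesis by simp
  qed
  have thp: "0 \<le> \<theta> (pol h) \<and> \<theta> (pol h) \<le> 1" for h using th prange[of h] by auto
  have Gb: "\<bar>G h\<bar> \<le> real T" if h: "h \<in> set_pmf (hist_pmf \<theta> Dl pol T)" for h
  proof -
    have "\<bar>G h\<bar> \<le> (\<Sum>s\<in>{1..T}. \<bar>\<theta> (arm h s) * tau Dl (d s)\<bar>)" unfolding G_def by (rule sum_abs)
    also have "\<dots> \<le> (\<Sum>s\<in>{1..T}. 1)"
    proof (intro sum_mono)
      fix s assume s: "s \<in> {1..T}"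
      show "\<bar>\<theta> (arm h s) * tau Dl (d s)\<bar> \<le> 1"
        using th[OF arm_range[OF h s]] tau_nonneg[of Dl "d s"] tau_le1[of Dl "d s"]
        by (auto simp: abs_mult intro: mult_le_one)
    qed
    finally show ?thesis by simp
  qed
  have pol_e: "measure_pmf.expectation (hist_pmf \<theta> Dl pol T) (\<lambda>h. cum_reward m h T) =
      measure_pmf.expectation (hist_pmf \<theta> Dl pol T) G"
    unfolding G_def d_def by (rule exp_cum[where \<theta>=\<theta> and pol=pol, OF thp])
  have pt: "C - G h \<le> H h" if h: "h \<in> set_pmf (hist_pmf \<theta> Dl pol T)" for h
  proof -
    have "C - G h = (\<Sum>s\<in>{1..T}. (\<theta> 1 - \<theta> (arm h s)) * tau Dl (d s))"
      unfolding C_def G_def by (simp add: sum_subtractf[symmetric] algebra_simps)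
    also have "\<dots> \<le> (\<Sum>s\<in>{1..T}. \<Sum>k\<in>{2..K}. if arm h s = k then (\<theta> 1 - \<theta> k) * tau Dl m else 0)"
    proof (intro sum_mono)
      fix s assume s: "s \<in> {1..T}"
      show "(\<theta> 1 - \<theta> (arm h s)) * tau Dl (d s) \<le> (\<Sum>k\<in>{2..K}. if arm h s = k then (\<theta> 1 - \<theta> k) * tau Dl m else 0)"
      proof (cases "arm h s = 1")
        case True
        then show ?thesis by simp
      next
        case False
        then have a2: "arm h s \<in> {2..K}" using arm_range[OF h s] by auto
        have "(\<Sum>k\<in>{2..K}. if arm h s = k then (\<theta> 1 - \<theta> k) * tau Dl m else 0) = (\<theta> 1 - \<theta> (arm h s)) * tau Dl m"
          using a2 by (simp add: sum.delta)
        moreover have "(\<theta> 1 - \<theta> (arm h s)) * tau Dl (d s) \<le> (\<theta> 1 - \<theta> (arm h s)) * tau Dl m"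
          using gap[OF a2] by (intro mult_left_mono tau_mono) (auto simp: d_def)
        ultimately show ?thesis by simp
      qed
    qed
    also have "\<dots> = (\<Sum>k\<in>{2..K}. \<Sum>s\<in>{1..T}. if arm h s = k then (\<theta> 1 - \<theta> k) * tau Dl m else 0)"
      by (rule sum.swap)
    also have "\<dots> = H h"
      unfolding H_def
    proof (intro sum.cong refl)
      fix k
      have e: "{s \<in> {1..Suc T - 1}. arm h s = k} = {1..T} \<inter> {s. arm h s = k}" by auto
      show "(\<Sum>s\<in>{1..T}. if arm h s = k then (\<theta> 1 - \<theta> k) * tau Dl m else 0) = (\<theta> 1 - \<theta> k) * tau Dl m * real (pc h k (Suc T))"
        unfolding pc_def e by (simp add: sum.If_cases Int_def)
    qed
    finally show ?thesis .
  qed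
  have Hb: "\<bar>H h\<bar> \<le> (\<Sum>k\<in>{2..K}. \<bar>\<theta> 1 - \<theta> k\<bar> * real T)" if h: "h \<in> set_pmf (hist_pmf \<theta> Dl pol T)" for h
  proof -
    have "\<bar>H h\<bar> \<le> (\<Sum>k\<in>{2..K}. \<bar>(\<theta> 1 - \<theta> k) * tau Dl m * real (pc h k (Suc T))\<bar>)" unfolding H_def by (rule sum_abs)
    also have "\<dots> \<le> (\<Sum>k\<in>{2..K}. \<bar>\<theta> 1 - \<theta> k\<bar> * real T)"
    proof (intro sum_mono)
      fix k
      have "\<bar>tau Dl m * real (pc h k (Suc T))\<bar> \<le> 1 * real T"
        using tau_nonneg[of Dl m] tau_le1[of Dl m] pc_le[of h k "Suc T"]
        by (simp add: abs_mult) (metis mult_mono mult_1 of_nat_0_le_iff of_nat_le_iff zero_le_one)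
      then show "\<bar>(\<theta> 1 - \<theta> k) * tau Dl m * real (pc h k (Suc T))\<bar> \<le> \<bar>\<theta> 1 - \<theta> k\<bar> * real T"
        by (simp add: abs_mult mult.assoc mult_left_mono)
    qed
    finally show ?thesis .
  qed
  have "regret \<theta> Dl m pol T = C - measure_pmf.expectation (hist_pmf \<theta> Dl pol T) G"
    unfolding regret_def orc pol_e ..
  also have "\<dots> = measure_pmf.expectation (hist_pmf \<theta> Dl pol T) (\<lambda>h. C - G h)"
    by (subst Bochner_Integration.integral_diff) (auto intro: integrable_pmf_bounded Gb)
  also have "\<dots> \<le> measure_pmf.expectation (hist_pmf \<theta> Dl pol T) H"
  proof (rule expectation_pmf_le[where B="\<bar>C\<bar> + real T" and B'="(\<Sum>k\<in>{2..K}. \<bar>\<theta> 1 - \<theta> k\<bar> * real T)"])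
    fix h assume h: "h \<in> set_pmf (hist_pmf \<theta> Dl pol T)"
    show "\<bar>C - G h\<bar> \<le> \<bar>C\<bar> + real T" using Gb[OF h] by linarith
    show "C - G h \<le> H h" by (rule pt[OF h])
    show "\<bar>H h\<bar> \<le> (\<Sum>k\<in>{2..K}. \<bar>\<theta> 1 - \<theta> k\<bar> * real T)" by (rule Hb[OF h])
  qed
  also have "measure_pmf.expectation (hist_pmf \<theta> Dl pol T) H =
      (\<Sum>k\<in>{2..K}. (\<theta> 1 - \<theta> k) * tau Dl m * measure_pmf.expectation (hist_pmf \<theta> Dl pol T) (\<lambda>h. real (pc h k (Suc T))))"
  proof -
    have i: "integrable (measure_pmf (hist_pmf \<theta> Dl pol T)) (\<lambda>h. real (pc h k (Suc T)))" for k
      by (rule integrable_pmf_bounded[where B="real T"]) (metis abs_of_nat diff_Suc_1 of_nat_le_iff pc_le)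
    show ?thesis unfolding H_def using i by (simp add: integral_sum)
  qed
  also have "\<dots> = tau Dl m * (\<Sum>k\<in>{2..K}. (\<theta> 1 - \<theta> k) *
      measure_pmf.expectation (hist_pmf \<theta> Dl pol T) (\<lambda>h. real (pc h k (Suc T))))"
    by (simp add: sum_distrib_left algebra_simps)
  finally show ?thesis .
qed




lemma beta_nonneg: "0 < \<epsilon> \<Longrightarrow> 0 \<le> (1 + \<epsilon>) * ln (real t)"
  by (cases "t = 0") auto

lemma beta_mono: "0 < \<epsilon> \<Longrightarrow> t \<le> t' \<Longrightarrow> (1 + \<epsilon>) * ln (real t) \<le> (1 + \<epsilon>) * ln (real t')"
  by (cases "t = 0") (auto intro!: mult_left_mono beta_nonneg)

lemma beta_sum:
  assumes e: "0 < \<epsilon>"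
  shows "(\<Sum>t\<in>{1..T}. exp (- ((1 + \<epsilon>) * ln (real t)))) \<le> (\<Sum>t. real t powr (- (1 + \<epsilon>)))"
proof -
  have s: "summable (\<lambda>t. real t powr (- (1 + \<epsilon>)))" using e by (subst summable_real_powr_iff) auto
  have "(\<Sum>t\<in>{1..T}. exp (- ((1 + \<epsilon>) * ln (real t)))) = (\<Sum>t\<in>{1..T}. real t powr (- (1 + \<epsilon>)))"
    by (intro sum.cong refl) (auto simp: powr_def algebra_simps)
  also have "\<dots> \<le> (\<Sum>t<Suc T. real t powr (- (1 + \<epsilon>)))"
    by (rule sum_mono2) auto
  also have "\<dots> \<le> (\<Sum>t. real t powr (- (1 + \<epsilon>)))"
    by (rule sum_le_suminf[OF s]) auto
  finally show ?thesis .
qed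

lemma bound_delta:
  fixes K m :: nat and \<theta> :: "nat \<Rightarrow> real" and Dl :: "nat pmf"
    and \<epsilon> :: real and pol :: "hist \<Rightarrow> nat"
  assumes K: "K \<ge> 1" and m: "m \<ge> 1"
    and th: "\<And>k. k \<in> {1..K} \<Longrightarrow> 0 \<le> \<theta> k \<and> \<theta> k \<le> 1"
    and gap: "\<And>k. k \<in> {2..K} \<Longrightarrow> \<theta> 1 - \<theta> k > 0"
    and tau: "tau Dl m > 0"
    and e: "\<epsilon> > 0"
    and pol: "is_delayed_ucb K Dl m (\<lambda>t. (1 + \<epsilon>) * ln (real t)) pol"
    and dl: "\<delta> > 0" "\<And>k. k \<in> {2..K} \<Longrightarrow> 2 * \<delta> < \<theta> 1 - \<theta> k"
  shows "\<exists>C. \<forall>T. regret \<theta> Dl m pol T \<le> (1 + \<epsilon>) * ln (real T) *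
     (\<Sum>k\<in>{2..K}. (\<theta> 1 - \<theta> k) / (2 * tau Dl m * (\<theta> 1 - \<theta> k - 2 * \<delta>)\<^sup>2)) + C"
proof -
  define beta where "beta = (\<lambda>t::nat. (1 + \<epsilon>) * ln (real t))"
  define Sb where "Sb = (\<Sum>t. real t powr (- (1 + \<epsilon>)))"
  define c where "c = \<delta> * tau Dl m"
  define E1 where "E1 = exp (4 * c * (c * (real m - 1) + (real m - 1))) / (1 - exp (- 2 * c\<^sup>2))"
  define E2 where "E2 = exp (4 * c\<^sup>2 * (real m - 1)) / (1 - exp (- 2 * c\<^sup>2)) * Sb"
  define C where "C = (\<Sum>k\<in>{2..K}. tau Dl m * (\<theta> 1 - \<theta> k) * (real (K + m) + 2 * (real m - 1) + 1 + E1 + E2))"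
  define G where "G = (\<lambda>k. (\<theta> 1 - \<theta> k) / (2 * tau Dl m * (\<theta> 1 - \<theta> k - 2 * \<delta>)\<^sup>2))"
  have polb: "is_delayed_ucb K Dl m beta pol" using pol by (simp add: beta_def)
  have b0: "\<And>t. 0 \<le> beta t" using beta_nonneg[OF e] by (simp add: beta_def)
  have bm: "\<And>t t'. t \<le> t' \<Longrightarrow> beta t \<le> beta t'" using beta_mono[OF e] by (simp add: beta_def)
  have Sbb: "\<And>T. (\<Sum>t\<in>{1..T}. exp (- beta t)) \<le> Sb" unfolding beta_def Sb_def by (rule beta_sum[OF e])
  show ?thesis
  proof (intro exI allI)
    fix T
    have ek: "measure_pmf.expectation (hist_pmf \<theta> Dl pol T) (\<lambda>h. real (pc h k (Suc T))) \<le>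
       real (K + m) + (beta T / (2 * ((\<theta> 1 - \<theta> k - 2 * \<delta>) * tau Dl m)\<^sup>2) + 2 * (real m - 1) + 1) + E1 + E2"
      if k: "k \<in> {2..K}" for k
      unfolding E1_def E2_def c_def
      by (rule exp_count[where \<theta>=\<theta> and k=k, OF polb m K k th tau dl(1) dl(2)[OF k] b0 bm Sbb])
    have "regret \<theta> Dl m pol T \<le> tau Dl m * (\<Sum>k\<in>{2..K}. (\<theta> 1 - \<theta> k) *
      measure_pmf.expectation (hist_pmf \<theta> Dl pol T) (\<lambda>h. real (pc h k (Suc T))))"
      by (rule regret_le[where \<theta>=\<theta>, OF pol K th gap])
    also have "\<dots> \<le> tau Dl m * (\<Sum>k\<in>{2..K}. (\<theta> 1 - \<theta> k) *
      (real (K + m) + (beta T / (2 * ((\<theta> 1 - \<theta> k - 2 * \<delta>) * tau Dl m)\<^sup>2) + 2 * (real m - 1) + 1) + E1 + E2))"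
    proof (rule mult_left_mono, rule sum_mono)
      fix k assume k: "k \<in> {2..K}"
      show "(\<theta> 1 - \<theta> k) * measure_pmf.expectation (hist_pmf \<theta> Dl pol T) (\<lambda>h. real (pc h k (Suc T))) \<le>
        (\<theta> 1 - \<theta> k) * (real (K + m) + (beta T / (2 * ((\<theta> 1 - \<theta> k - 2 * \<delta>) * tau Dl m)\<^sup>2) + 2 * (real m - 1) + 1) + E1 + E2)"
        using gap[OF k] ek[OF k] by (intro mult_left_mono) auto
    qed (use tau in auto)
    also have "\<dots> = (\<Sum>k\<in>{2..K}. beta T * G k + tau Dl m * (\<theta> 1 - \<theta> k) * (real (K + m) + 2 * (real m - 1) + 1 + E1 + E2))"
      unfolding sum_distrib_left
    proof (intro sum.cong refl)
      fix k assume k: "k \<in> {2..K}"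
      have nz: "\<theta> 1 - \<theta> k - 2 * \<delta> \<noteq> 0" using dl(2)[OF k] by simp
      show "tau Dl m * ((\<theta> 1 - \<theta> k) * (real (K + m) + (beta T / (2 * ((\<theta> 1 - \<theta> k - 2 * \<delta>) * tau Dl m)\<^sup>2) + 2 * (real m - 1) + 1) + E1 + E2)) =
        beta T * G k + tau Dl m * (\<theta> 1 - \<theta> k) * (real (K + m) + 2 * (real m - 1) + 1 + E1 + E2)"
      proof -
        define B where "B = beta T / (2 * ((\<theta> 1 - \<theta> k - 2 * \<delta>) * tau Dl m)\<^sup>2)"
        define D where "D = \<theta> 1 - \<theta> k"
        define g where "g = \<theta> 1 - \<theta> k - 2 * \<delta>"
        have key: "tau Dl m * (D * B) = beta T * G k"
        proof -
          have "tau Dl m * (D * (beta T / (2 * (g * tau Dl m)\<^sup>2))) = beta T * (D / (2 * tau Dl m * g\<^sup>2))"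
          proof -
            have gnz: "g \<noteq> 0" using nz by (simp add: g_def)
            show ?thesis using tau gnz by (simp add: power2_eq_square field_simps)
          qed
          then show ?thesis unfolding B_def G_def D_def g_def by simp
        qed
        have "tau Dl m * (D * (real (K + m) + (B + 2 * (real m - 1) + 1) + E1 + E2)) =
          tau Dl m * (D * B) + tau Dl m * D * (real (K + m) + 2 * (real m - 1) + 1 + E1 + E2)"
          by (simp add: algebra_simps)
        then show ?thesis unfolding key by (simp add: B_def D_def)
      qed
    qed
    also have "\<dots> = (1 + \<epsilon>) * ln (real T) * (\<Sum>k\<in>{2..K}. G k) + C"
      unfolding C_def beta_def by (simp add: sum.distrib sum_distrib_left)
    finally show "regret \<theta> Dl m pol T \<le> (1 + \<epsilon>) * ln (real T) *
     (\<Sum>k\<in>{2..K}. (\<theta> 1 - \<theta> k) / (2 * tau Dl m * (\<theta> 1 - \<theta> k - 2 * \<delta>)\<^sup>2)) + C"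
      unfolding G_def .
  qed
qed




theorem theorem9:
  fixes K m :: nat and \<theta> :: "nat \<Rightarrow> real" and Dl :: "nat pmf"
    and \<epsilon> :: real and pol :: "hist \<Rightarrow> nat"
  assumes "K \<ge> 1" and "m \<ge> 1"
    and "\<And>k. k \<in> {1..K} \<Longrightarrow> 0 \<le> \<theta> k \<and> \<theta> k \<le> 1"
    and "\<And>k. k \<in> {2..K} \<Longrightarrow> \<theta> 1 - \<theta> k > 0"
    and "tau Dl m > 0"
    and "\<epsilon> > 0"
    and "is_delayed_ucb K Dl m (\<lambda>t. (1 + \<epsilon>) * ln (real t)) pol"
  shows "\<exists>f :: nat \<Rightarrow> real.
           ((\<lambda>T. f T / ln (real T)) \<longlongrightarrow> 0) sequentially \<and>
           (\<forall>T. regret \<theta> Dl m pol T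
                 \<le> (1 + \<epsilon>) * ln (real T) * (\<Sum>k\<in>{2..K}. 1 / (2 * tau Dl m * (\<theta> 1 - \<theta> k))) + f T)"
proof -
  note K = assms(1) and m = assms(2) and th = assms(3) and gap = assms(4) and tau = assms(5)
    and e = assms(6) and pol = assms(7)
  define B0 where "B0 = (\<Sum>k\<in>{2..K}. 1 / (2 * tau Dl m * (\<theta> 1 - \<theta> k)))"
  define Bd where "Bd = (\<lambda>\<delta>::real. \<Sum>k\<in>{2..K}. (\<theta> 1 - \<theta> k) / (2 * tau Dl m * (\<theta> 1 - \<theta> k - 2 * \<delta>)\<^sup>2))"
  define f where "f = (\<lambda>T. max 0 (regret \<theta> Dl m pol T - (1 + \<epsilon>) * ln (real T) * B0))"
  have Bd0: "Bd 0 = B0"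
    unfolding Bd_def B0_def
  proof (intro sum.cong refl)
    fix k assume k: "k \<in> {2..K}"
    have "\<theta> 1 - \<theta> k \<noteq> 0" using gap[OF k] by simp
    then show "(\<theta> 1 - \<theta> k) / (2 * tau Dl m * (\<theta> 1 - \<theta> k - 2 * 0)\<^sup>2) = 1 / (2 * tau Dl m * (\<theta> 1 - \<theta> k))"
      by (simp add: power2_eq_square)
  qed
  have Bdlim: "(Bd \<longlongrightarrow> B0) (at_right 0)"
  proof -
    have "(Bd \<longlongrightarrow> Bd 0) (at_right 0)"
      unfolding Bd_def
    proof (intro tendsto_intros)
      fix k assume k: "k \<in> {2..K}"
      show "2 * tau Dl m * (\<theta> 1 - \<theta> k - 2 * 0)\<^sup>2 \<noteq> 0" using gap[OF k] tau by simp
    qed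
    then show ?thesis using Bd0 by simp
  qed
  have lim: "((\<lambda>T. f T / ln (real T)) \<longlongrightarrow> 0) sequentially"
  proof (rule LIMSEQ_I)
    fix \<eta> :: real assume eta: "0 < \<eta>"
    define \<eta>' where "\<eta>' = \<eta> / (4 * (1 + \<epsilon>))"
    have eta': "0 < \<eta>'" using eta e by (simp add: \<eta>'_def)
    have ev1: "\<forall>\<^sub>F \<delta> in at_right 0. Bd \<delta> < B0 + \<eta>'"
      using order_tendstoD(2)[OF Bdlim, of "B0 + \<eta>'"] eta' by simp
    have ev2: "\<forall>\<^sub>F \<delta> in at_right (0::real). 0 < \<delta>" by (rule eventually_at_right_less)
    have ev3: "\<forall>\<^sub>F \<delta> in at_right (0::real). \<forall>k\<in>{2..K}. 2 * \<delta> < \<theta> 1 - \<theta> k"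
    proof (rule eventually_ball_finite)
      show "finite {2..K}" by simp
      show "\<forall>k\<in>{2..K}. \<forall>\<^sub>F \<delta> in at_right 0. 2 * \<delta> < \<theta> 1 - \<theta> k"
      proof
        fix k assume k: "k \<in> {2..K}"
        have "((\<lambda>\<delta>::real. 2 * \<delta>) \<longlongrightarrow> 2 * 0) (at_right 0)"
          by (intro tendsto_intros)
        then show "\<forall>\<^sub>F \<delta> in at_right 0. 2 * \<delta> < \<theta> 1 - \<theta> k"
          using order_tendstoD(2)[of "\<lambda>\<delta>::real. 2 * \<delta>" 0 "at_right 0" "\<theta> 1 - \<theta> k"] gap[OF k] by simp
      qed
    qed
    obtain \<delta> where dl: "Bd \<delta> < B0 + \<eta>'" "0 < \<delta>" "\<forall>k\<in>{2..K}. 2 * \<delta> < \<theta> 1 - \<theta> k"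
      using eventually_happens'[OF _ eventually_conj[OF ev1 eventually_conj[OF ev2 ev3]]] by auto
    obtain C where C: "\<And>T. regret \<theta> Dl m pol T \<le> (1 + \<epsilon>) * ln (real T) * Bd \<delta> + C"
      using bound_delta[where \<theta>=\<theta>, OF K m th gap tau e pol dl(2)] dl(3) unfolding Bd_def by blast
    define M where "M = max 1 (4 * \<bar>C\<bar> / \<eta>)"
    have "filterlim (\<lambda>T. ln (real T)) at_top sequentially"
      by (rule filterlim_compose[OF ln_at_top filterlim_real_sequentially])
    then have "\<forall>\<^sub>F T in sequentially. M < ln (real T)"
      by (simp add: filterlim_at_top_dense)
    then obtain no where no: "\<And>T. T \<ge> no \<Longrightarrow> M < ln (real T)"
      unfolding eventually_sequentially by blast
    show "\<exists>no. \<forall>T\<ge>no. norm (f T / ln (real T) - 0) < \<eta>"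
    proof (intro exI allI impI)
      fix T assume T: "T \<ge> no"
      define l where "l = ln (real T)"
      have lM: "M < l" using no[OF T] by (simp add: l_def)
      have l1: "1 < l" using lM by (simp add: M_def)
      have lC: "4 * \<bar>C\<bar> / \<eta> < l" using lM by (simp add: M_def)
      then have lC': "\<bar>C\<bar> < \<eta> / 4 * l" using eta by (simp add: field_simps)
      have f0: "0 \<le> f T" by (simp add: f_def)
      have "regret \<theta> Dl m pol T - (1 + \<epsilon>) * l * B0 \<le> (1 + \<epsilon>) * l * (Bd \<delta> - B0) + C"
        using C[of T] by (simp add: l_def algebra_simps)
      also have "\<dots> \<le> (1 + \<epsilon>) * l * \<eta>' + \<bar>C\<bar>"
        using dl(1) e l1 by (intro add_mono mult_left_mono) auto
      also have "(1 + \<epsilon>) * l * \<eta>' = \<eta> / 4 * l" using e by (simp add: \<eta>'_def field_simps)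
      finally have "f T \<le> \<eta> / 4 * l + \<bar>C\<bar>"
        unfolding f_def l_def[symmetric] using eta l1 by auto
      also have "\<dots> < \<eta> / 2 * l" using lC' by simp
      finally have "f T / l < \<eta> / 2" using l1 by (simp add: field_simps)
      then have fl: "f T / l < \<eta>" using eta by linarith
      have "0 \<le> f T / l" using f0 l1 by simp
      then show "norm (f T / ln (real T) - 0) < \<eta>"
        using fl by (simp add: l_def[symmetric])
    qed
  qed
  show ?thesis
  proof (intro exI conjI allI)
    show "((\<lambda>T. f T / ln (real T)) \<longlongrightarrow> 0) sequentially" by (rule lim)
    fix T
    show "regret \<theta> Dl m pol T \<le> (1 + \<epsilon>) * ln (real T) * (\<Sum>k\<in>{2..K}. 1 / (2 * tau Dl m * (\<theta> 1 - \<theta> k))) + f T"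
      unfolding B0_def[symmetric] f_def by simp
  qed
qed


end
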